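(* Every nonzero finite-dimensional left $\mathcal{O}_{nc}(B^+)$-comodule $W$ contains a semi-invariant, i.e. a nonzero $w\in W$ with coaction $w\mapsto g\otimes w$ for some grouplike element $g\in\mathcal{O}_{nc}(B^+)$; moreover $g$ can be taken of the form $a^id^j$.
   Context: $\mathcal{O}_{nc}(\mathrm{GL}_2)$ is the Hopf algebra generated by $a,b,c,d,\delta,\delta^{-1}$ with relations $ac=ca$, $bd=db$, $ad-cb=\delta=da-bc$, $\delta\delta^{-1}=1=\delta^{-1}\delta$, $a\delta^{-1}d-b\delta^{-1}c=1=d\delta^{-1}a-c\delta^{-1}b$, $b\delta^{-1}a=a\delta^{-1}b$, $c\delta^{-1}d=d\delta^{-1}c$, with $\Delta(a)=a\otimes a+b\otimes c$, $\Delta(b)=a\otimes b+b\otimes d$, $\Delta(c)=c\otimes a+d\otimes c$, $\Delta(d)=c\otimes b+d\otimes d$, $\Delta(\delta^{\pm1})=\delta^{\pm1}\otimes\delta^{\pm1}$. $\mathcal{O}_{nc}(B^+):=\mathcal{O}_{nc}(\mathrm{GL}_2)/(c)$, a quotient Hopf algebra in which the images of $a,d$ are invertible grouplike elements and $\Delta(b)=a\otimes b+b\otimes d$. $k$ algebraically closed. *)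

theory Defs
  imports "HOL-Computational_Algebra.Polynomial"
begin

datatype gen = GA | GB | GC | GD | GDel | GDelInv

text \<open>Elements of the free algebra: functions from words to coefficients (finitely supported).
  Elements of the tensor square of the free algebra: functions on pairs of words.\<close>
type_synonym 'k fa = "gen list \<Rightarrow> 'k"
type_synonym 'k fa2 = "gen list \<times> gen list \<Rightarrow> 'k"

definition fsupp :: "('a \<Rightarrow> 'k::zero) \<Rightarrow> bool" where
  "fsupp f \<longleftrightarrow> finite {x. f x \<noteq> 0}"

definition fa_add :: "('a \<Rightarrow> 'k::field) \<Rightarrow> ('a \<Rightarrow> 'k) \<Rightarrow> ('a \<Rightarrow> 'k)" where
  "fa_add f g = (\<lambda>w. f w + g w)"

definition fa_sub :: "('a \<Rightarrow> 'k::field) \<Rightarrow> ('a \<Rightarrow> 'k) \<Rightarrow> ('a \<Rightarrow> 'k)" where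
  "fa_sub f g = (\<lambda>w. f w - g w)"

definition fa_mult :: "'k::field fa \<Rightarrow> 'k fa \<Rightarrow> 'k fa" where
  "fa_mult f g = (\<lambda>w. \<Sum>i\<le>length w. f (take i w) * g (drop i w))"

definition fa_word :: "gen list \<Rightarrow> 'k::field fa" where
  "fa_word u = (\<lambda>w. if w = u then 1 else 0)"

abbreviation fa_one :: "'k::field fa" where "fa_one \<equiv> fa_word []"

text \<open>Defining relations of O_nc(GL_2) (as elements lhs - rhs), plus c for the quotient B+.\<close>
definition bplus_rels :: "'k::field fa set" where
  "bplus_rels = {
     fa_sub (fa_word [GA,GC]) (fa_word [GC,GA]),
     fa_sub (fa_word [GB,GD]) (fa_word [GD,GB]),
     fa_sub (fa_sub (fa_word [GA,GD]) (fa_word [GC,GB])) (fa_word [GDel]),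
     fa_sub (fa_sub (fa_word [GD,GA]) (fa_word [GB,GC])) (fa_word [GDel]),
     fa_sub (fa_word [GDel,GDelInv]) fa_one,
     fa_sub (fa_word [GDelInv,GDel]) fa_one,
     fa_sub (fa_sub (fa_word [GA,GDelInv,GD]) (fa_word [GB,GDelInv,GC])) fa_one,
     fa_sub (fa_sub (fa_word [GD,GDelInv,GA]) (fa_word [GC,GDelInv,GB])) fa_one,
     fa_sub (fa_word [GB,GDelInv,GA]) (fa_word [GA,GDelInv,GB]),
     fa_sub (fa_word [GC,GDelInv,GD]) (fa_word [GD,GDelInv,GC]),
     fa_word [GC] }"

inductive_set ideal_gen :: "'k::field fa set \<Rightarrow> 'k fa set" for R where
  zero: "(\<lambda>_. 0) \<in> ideal_gen R"
| gen: "r \<in> R \<Longrightarrow> fsupp x \<Longrightarrow> fsupp y \<Longrightarrow> fa_mult (fa_mult x r) y \<in> ideal_gen R"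
| add: "f \<in> ideal_gen R \<Longrightarrow> g \<in> ideal_gen R \<Longrightarrow> fa_add f g \<in> ideal_gen R"

definition Bideal :: "'k::field fa set" where
  "Bideal = ideal_gen bplus_rels"

text \<open>Equality in O_nc(B+) of two representatives.\<close>
definition Heq :: "'k::field fa \<Rightarrow> 'k fa \<Rightarrow> bool" where
  "Heq f g \<longleftrightarrow> fa_sub f g \<in> Bideal"

definition fa_tensor :: "'k::field fa \<Rightarrow> 'k fa \<Rightarrow> 'k fa2" where
  "fa_tensor f g = (\<lambda>(u, v). f u * g v)"

text \<open>Kernel of F (x) F -> H (x) H, namely I (x) F + F (x) I.\<close>
inductive_set tensor_ideal :: "'k::field fa set \<Rightarrow> 'k fa2 set" for I where
  zero: "(\<lambda>_. 0) \<in> tensor_ideal I"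
| left: "p \<in> I \<Longrightarrow> fsupp q \<Longrightarrow> fa_tensor p q \<in> tensor_ideal I"
| right: "fsupp p \<Longrightarrow> q \<in> I \<Longrightarrow> fa_tensor p q \<in> tensor_ideal I"
| add: "P \<in> tensor_ideal I \<Longrightarrow> Q \<in> tensor_ideal I \<Longrightarrow> fa_add P Q \<in> tensor_ideal I"

text \<open>Equality in O_nc(B+) (x) O_nc(B+) of two representatives.\<close>
definition HHeq :: "'k::field fa2 \<Rightarrow> 'k fa2 \<Rightarrow> bool" where
  "HHeq P Q \<longleftrightarrow> fa_sub P Q \<in> tensor_ideal Bideal"

definition fa2_mult :: "'k::field fa2 \<Rightarrow> 'k fa2 \<Rightarrow> 'k fa2" where
  "fa2_mult P Q = (\<lambda>(u, v). \<Sum>i\<le>length u. \<Sum>j\<le>length v.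
      P (take i u, take j v) * Q (drop i u, drop j v))"

definition fa2_one :: "'k::field fa2" where
  "fa2_one = fa_tensor fa_one fa_one"

fun delta_gen :: "gen \<Rightarrow> 'k::field fa2" where
  "delta_gen GA = fa_add (fa_tensor (fa_word [GA]) (fa_word [GA])) (fa_tensor (fa_word [GB]) (fa_word [GC]))"
| "delta_gen GB = fa_add (fa_tensor (fa_word [GA]) (fa_word [GB])) (fa_tensor (fa_word [GB]) (fa_word [GD]))"
| "delta_gen GC = fa_add (fa_tensor (fa_word [GC]) (fa_word [GA])) (fa_tensor (fa_word [GD]) (fa_word [GC]))"
| "delta_gen GD = fa_add (fa_tensor (fa_word [GC]) (fa_word [GB])) (fa_tensor (fa_word [GD]) (fa_word [GD]))"
| "delta_gen GDel = fa_tensor (fa_word [GDel]) (fa_word [GDel])"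
| "delta_gen GDelInv = fa_tensor (fa_word [GDelInv]) (fa_word [GDelInv])"

definition delta_word :: "gen list \<Rightarrow> 'k::field fa2" where
  "delta_word w = foldr (\<lambda>x P. fa2_mult (delta_gen x) P) w fa2_one"

text \<open>Comultiplication, extended as an algebra map (applied to finitely supported elements).\<close>
definition fa_Delta :: "'k::field fa \<Rightarrow> 'k fa2" where
  "fa_Delta f = (\<lambda>uv. \<Sum>w\<in>{w. f w \<noteq> 0}. f w * delta_word w uv)"

fun eps_gen :: "gen \<Rightarrow> 'k::field" where
  "eps_gen GA = 1" | "eps_gen GB = 0" | "eps_gen GC = 0" | "eps_gen GD = 1"
| "eps_gen GDel = 1" | "eps_gen GDelInv = 1"

definition fa_eps :: "'k::field fa \<Rightarrow> 'k" where
  "fa_eps f = (\<Sum>w\<in>{w. f w \<noteq> 0}. f w * prod_list (map eps_gen w))"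

text \<open>A left O_nc(B+)-comodule structure on the finite-dimensional space W = k^'n,
  given in coordinates: rho(e_j) = sum_i X j i (x) e_i.\<close>
definition is_left_comodule :: "('n::finite \<Rightarrow> 'n \<Rightarrow> 'k::field fa) \<Rightarrow> bool" where
  "is_left_comodule X \<longleftrightarrow>
     (\<forall>j i. fsupp (X j i)) \<and>
     (\<forall>j i. HHeq (fa_Delta (X j i)) (\<lambda>uv. \<Sum>k\<in>UNIV. fa_tensor (X j k) (X k i) uv)) \<and>
     (\<forall>j i. fa_eps (X j i) = (if j = i then 1 else 0))"

definition grouplike :: "'k::field fa \<Rightarrow> bool" where
  "grouplike g \<longleftrightarrow> fsupp g \<and> HHeq (fa_Delta g) (fa_tensor g g) \<and> fa_eps g = 1"

text \<open>Coaction of w = sum_j w_j e_j is w \<mapsto> g (x) w.\<close>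
definition semi_invariant_with :: "('n::finite \<Rightarrow> 'n \<Rightarrow> 'k::field fa) \<Rightarrow> ('n \<Rightarrow> 'k) \<Rightarrow> 'k fa \<Rightarrow> bool" where
  "semi_invariant_with X w g \<longleftrightarrow> w \<noteq> (\<lambda>_. 0) \<and> grouplike g \<and>
     (\<forall>i. Heq (\<lambda>u. \<Sum>j\<in>UNIV. w j * X j i u) (\<lambda>u. w i * g u))"

text \<open>Words for a^p and d^q (p, q integers); in O_nc(B+) the inverse of a is
  delta^-1 d and the inverse of d is delta^-1 a.\<close>
definition a_pow_word :: "int \<Rightarrow> gen list" where
  "a_pow_word p = (if p \<ge> 0 then replicate (nat p) GA else concat (replicate (nat (- p)) [GDelInv, GD]))"

definition d_pow_word :: "int \<Rightarrow> gen list" where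
  "d_pow_word q = (if q \<ge> 0 then replicate (nat q) GD else concat (replicate (nat (- q)) [GDelInv, GA]))"

definition alg_closed_field :: "'k::field itself \<Rightarrow> bool" where
  "alg_closed_field _ \<longleftrightarrow> (\<forall>p :: 'k poly. degree p > 0 \<longrightarrow> (\<exists>x. poly p x = 0))"

end

theory Submission imports Defs "HOL-Library.Function_Algebras" "HOL-Library.Product_Plus" begin


lemma fun_sum_apply: "(sum F A) x = (\<Sum>a\<in>A. F a x)"
  by (induction A rule: infinite_finite_induct) auto

definition conv :: "('a \<Rightarrow> 'a \<Rightarrow> 'a) \<Rightarrow> ('a \<Rightarrow> 'k::comm_semiring_1) \<Rightarrow> ('a \<Rightarrow> 'k) \<Rightarrow> 'a \<Rightarrow> 'k" where
  "conv op F G z = (\<Sum>(x,y)\<in>{(x,y). op x y = z}. F x * G y)"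

lemma conv_assoc:
  assumes as: "\<And>x y w. op (op x y) w = op x (op y w)"
    and fin: "\<And>z. finite {(x,y). op x y = z}"
  shows "conv op (conv op F G) H z = conv op F (conv op G H) z"
proof -
  let ?D = "\<lambda>z. {(x,y). op x y = z}"
  let ?T = "{(x,y,w). op (op x y) w = z}"
  have "conv op (conv op F G) H z = (\<Sum>q\<in>?D z. \<Sum>r\<in>?D (fst q). F (fst r) * G (snd r) * H (snd q))"
    unfolding conv_def by (auto simp: sum_distrib_right split_beta intro!: sum.cong)
  also have "\<dots> = (\<Sum>p\<in>Sigma (?D z) (\<lambda>q. ?D (fst q)). F (fst (snd p)) * G (snd (snd p)) * H (snd (fst p)))"
    by (subst sum.Sigma) (auto simp: fin split_beta)
  also have "\<dots> = (\<Sum>t\<in>?T. F (fst t) * G (fst (snd t)) * H (snd (snd t)))"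
    by (rule sum.reindex_bij_witness[where i="\<lambda>(x,y,w). ((op x y, w), (x,y))" and j="\<lambda>((s,w),(x,y)). (x,y,w)"]) auto
  also have "\<dots> = (\<Sum>p\<in>Sigma (?D z) (\<lambda>q. ?D (snd q)). F (fst (fst p)) * (G (fst (snd p)) * H (snd (snd p))))"
    by (rule sum.reindex_bij_witness[where j="\<lambda>(x,y,w). ((x, op y w), (y,w))" and i="\<lambda>((x,t),(y,w)). (x,y,w)"]) (auto simp: as mult.assoc)
  also have "\<dots> = (\<Sum>q\<in>?D z. \<Sum>r\<in>?D (snd q). F (fst q) * (G (fst r) * H (snd r)))"
    by (subst sum.Sigma) (auto simp: fin split_beta)
  also have "\<dots> = conv op F (conv op G H) z"
    unfolding conv_def by (auto simp: sum_distrib_left split_beta intro!: sum.cong)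
  finally show ?thesis .
qed

lemma splits_image: "{(x,y). x @ y = w} = (\<lambda>i. (take i w, drop i w)) ` {..length w}"
proof (intro set_eqI iffI)
  fix p assume "p \<in> {(x,y). x @ y = w}"
  then obtain a b where "p = (a,b)" "a @ b = w" by auto
  thus "p \<in> (\<lambda>i. (take i w, drop i w)) ` {..length w}"
    by (intro image_eqI[where x="length a"]) auto
qed auto

lemma splits_inj: "inj_on (\<lambda>i. (take i w, drop i w)) {..length w}"
  by (auto simp: inj_on_def) (metis append_take_drop_id length_take min.absorb2)

lemma finite_app_splits: "finite {(x,y). x @ y = (w::'a list)}"
proof -
  have "{(x,y). x @ y = w} = (\<lambda>i. (take i w, drop i w)) ` {..length w}"
    by (rule splits_image)
  thus ?thesis by simp
qed

lemma fa_mult_conv: "fa_mult f g = conv (@) f g"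
proof
  fix w :: "gen list"
  note splits_image[of w] splits_inj[of w]
  then show "fa_mult f g w = conv (@) f g w"
    unfolding fa_mult_def conv_def by (simp add: sum.reindex)
qed

lemma fa_mult_assoc: "fa_mult (fa_mult f g) h = fa_mult f (fa_mult g h)"
  unfolding fa_mult_conv by (rule ext, rule conv_assoc) (auto simp: finite_app_splits)

definition app2 :: "gen list \<times> gen list \<Rightarrow> gen list \<times> gen list \<Rightarrow> gen list \<times> gen list" where
  "app2 x y = (fst x @ fst y, snd x @ snd y)"

lemma finite_app2: "finite {(x,y). app2 x y = z}"
proof -
  have "{(x,y). app2 x y = z} \<subseteq> (\<lambda>((a,b),(c,d)). ((a,c),(b,d))) ` ({(x,y). x @ y = fst z} \<times> {(x,y). x @ y = snd z})"
    by (auto simp: app2_def image_iff)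
  thus ?thesis by (rule finite_subset) (auto intro: finite_app_splits)
qed

lemma fa2_mult_conv: "fa2_mult P Q = conv app2 P Q"
proof
  fix z :: "gen list \<times> gen list"
  obtain u v where z: "z = (u,v)" by (cases z)
  have "fa2_mult P Q (u,v) = (\<Sum>(u1,u2)\<in>{(x,y). x @ y = u}. \<Sum>(v1,v2)\<in>{(x,y). x @ y = v}. P (u1,v1) * Q (u2,v2))"
  proof -
    have A: "\<And>F :: gen list \<Rightarrow> gen list \<Rightarrow> 'c::comm_monoid_add. \<And>w. (\<Sum>i\<le>length w. F (take i w) (drop i w)) = (\<Sum>(x,y)\<in>{(x,y). x @ y = w}. F x y)"
    proof -
      fix F :: "gen list \<Rightarrow> gen list \<Rightarrow> 'c::comm_monoid_add" and w :: "gen list"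
      note splits_image[of w] splits_inj[of w]
      then show "(\<Sum>i\<le>length w. F (take i w) (drop i w)) = (\<Sum>(x,y)\<in>{(x,y). x @ y = w}. F x y)"
        by (simp add: sum.reindex)
    qed
    have B: "\<And>a b. (\<Sum>j\<le>length v. P (a, take j v) * Q (b, drop j v)) = (\<Sum>(v1,v2)\<in>{(x,y). x @ y = v}. P (a,v1) * Q (b,v2))"
      by (rule A[where F="\<lambda>x y. P (_, x) * Q (_, y)"])
    show ?thesis unfolding fa2_mult_def
      by (simp add: B A[where F="\<lambda>a b. \<Sum>(v1,v2)\<in>{(x,y). x @ y = v}. P (a,v1) * Q (b,v2)"])
  qed
  also have "\<dots> = (\<Sum>a\<in>{(x,y). x @ y = u}. \<Sum>b\<in>{(x,y). x @ y = v}. P (fst a, fst b) * Q (snd a, snd b))"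
    by (simp add: split_beta)
  also have "\<dots> = (\<Sum>(a,b)\<in>{(x,y). x @ y = u} \<times> {(x,y). x @ y = v}. P (fst a, fst b) * Q (snd a, snd b))"
    by (rule sum.cartesian_product)
  also have "\<dots> = (\<Sum>p\<in>{(x,y). x @ y = u} \<times> {(x,y). x @ y = v}. P (fst (fst p), fst (snd p)) * Q (snd (fst p), snd (snd p)))"
    by (simp add: split_beta)
  also have "\<dots> = conv app2 P Q (u,v)"
    unfolding conv_def
    by (rule sum.reindex_bij_witness[where j="\<lambda>((a,b),(c,d)). ((a,c),(b,d))" and i="\<lambda>((a,c),(b,d)). ((a,b),(c,d))"])
       (auto simp: app2_def)
  finally show "fa2_mult P Q z = conv app2 P Q z" using z by simp
qed

lemma fa2_mult_assoc: "fa2_mult (fa2_mult P Q) R = fa2_mult P (fa2_mult Q R)"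
  unfolding fa2_mult_conv by (rule ext, rule conv_assoc[OF _ finite_app2]) (simp add: app2_def)


definition sm :: "'k::field \<Rightarrow> ('a \<Rightarrow> 'k) \<Rightarrow> ('a \<Rightarrow> 'k)" where
  "sm c f = (\<lambda>w. c * f w)"

definition supp :: "('a \<Rightarrow> 'k::zero) \<Rightarrow> 'a set" where
  "supp f = {x. f x \<noteq> 0}"

lemma fa_add_eq: "fa_add f g = f + g" by (simp add: fa_add_def fun_eq_iff)
lemma fa_sub_eq: "fa_sub f g = f - g" by (simp add: fa_sub_def fun_eq_iff)

lemma fsupp_supp: "fsupp f \<longleftrightarrow> finite (supp f)" by (simp add: fsupp_def supp_def)

lemma fsupp_zero[simp]: "fsupp (0::'a \<Rightarrow> 'k::zero)" by (simp add: fsupp_def)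
lemma fsupp_zero'[simp]: "fsupp (\<lambda>_. 0::'k::zero)" by (simp add: fsupp_def)

lemma fsupp_add[simp]: "fsupp f \<Longrightarrow> fsupp g \<Longrightarrow> fsupp (f + (g::'a \<Rightarrow> 'k::field))"
  unfolding fsupp_def by (rule finite_subset[of _ "{x. f x \<noteq> 0} \<union> {x. g x \<noteq> 0}"]) auto
lemma fsupp_diff[simp]: "fsupp f \<Longrightarrow> fsupp g \<Longrightarrow> fsupp (f - (g::'a \<Rightarrow> 'k::field))"
  unfolding fsupp_def by (rule finite_subset[of _ "{x. f x \<noteq> 0} \<union> {x. g x \<noteq> 0}"]) auto
lemma fsupp_uminus[simp]: "fsupp (- (g::'a \<Rightarrow> 'k::field)) = fsupp g"
  unfolding fsupp_def by simp
lemma fsupp_sm[simp]: "fsupp f \<Longrightarrow> fsupp (sm c f)"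
  unfolding fsupp_def sm_def by (rule finite_subset[of _ "{x. f x \<noteq> 0}"]) auto
lemma fsupp_sum[simp]: "(\<And>i. i \<in> A \<Longrightarrow> fsupp (F i)) \<Longrightarrow> fsupp (sum F A :: 'a \<Rightarrow> 'k::field)"
  by (induction A rule: infinite_finite_induct) auto
lemma fsupp_word[simp]: "fsupp (fa_word u :: gen list \<Rightarrow> 'k::field)"
  unfolding fsupp_def fa_word_def by (rule finite_subset[of _ "{u}"]) auto

lemma sm_apply[simp]: "sm c f x = c * f x" by (simp add: sm_def)
lemma sm_zero[simp]: "sm 0 f = 0" "sm c 0 = 0" by (auto simp: sm_def fun_eq_iff)
lemma sm_one[simp]: "sm 1 f = f" by (simp add: sm_def fun_eq_iff)
lemma sm_sm[simp]: "sm c (sm d f) = sm (c*d) f" by (simp add: sm_def fun_eq_iff)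
lemma sm_add: "sm c (f + g) = sm c f + sm c g" by (simp add: sm_def fun_eq_iff algebra_simps)
lemma sm_diff: "sm c (f - g) = sm c f - sm c g" by (simp add: sm_def fun_eq_iff algebra_simps)
lemma sm_sum: "sm c (sum F A) = (\<Sum>i\<in>A. sm c (F i))"
  by (simp add: sm_def fun_eq_iff fun_sum_apply sum_distrib_left)
lemma sum_sm: "sm (sum F A) f = (\<Sum>i\<in>A. sm (F i) f)"
  by (simp add: sm_def fun_eq_iff fun_sum_apply sum_distrib_right)

lemma fa_word_apply: "fa_word u w = (if w = u then 1 else 0)" by (simp add: fa_word_def)

lemma decomp:
  assumes "finite S" "supp f \<subseteq> S"
  shows "f = (\<Sum>u\<in>S. sm (f u) (fa_word u :: gen list \<Rightarrow> 'k::field))"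
proof
  fix w
  have "(\<Sum>u\<in>S. sm (f u) (fa_word u :: gen list \<Rightarrow> 'k::field)) w = (\<Sum>u\<in>S. if u = w then f u else 0)"
    by (auto simp: fun_sum_apply fa_word_def intro!: sum.cong)
  also have "\<dots> = f w" using assms by (auto simp: supp_def)
  finally show "f w = (\<Sum>u\<in>S. sm (f u) (fa_word u :: gen list \<Rightarrow> 'k::field)) w" by simp
qed

lemma decomp': "fsupp f \<Longrightarrow> f = (\<Sum>u\<in>supp f. sm (f u) (fa_word u :: gen list \<Rightarrow> 'k::field))"
  by (rule decomp) (auto simp: fsupp_supp)

subsection \<open>Bilinearity of multiplication\<close>

lemma conv_add_left: "conv op (F + G) H = conv op F H + conv op G H"
  by (auto simp: conv_def fun_eq_iff algebra_simps sum.distrib split_beta)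
lemma conv_add_right: "conv op H (F + G) = conv op H F + conv op H G"
  by (auto simp: conv_def fun_eq_iff algebra_simps sum.distrib split_beta)
lemma conv_diff_left: "conv op (F - G) (H::_\<Rightarrow>'k::field) = conv op F H - conv op G H"
  by (auto simp: conv_def fun_eq_iff algebra_simps sum_subtractf split_beta)
lemma conv_diff_right: "conv op (H::_\<Rightarrow>'k::field) (F - G) = conv op H F - conv op H G"
  by (auto simp: conv_def fun_eq_iff algebra_simps sum_subtractf split_beta)
lemma conv_sm_left: "conv op (sm c F) (H::_\<Rightarrow>'k::field) = sm c (conv op F H)"
  by (auto simp: conv_def fun_eq_iff algebra_simps sum_distrib_left split_beta)
lemma conv_sm_right: "conv op H (sm c F :: _\<Rightarrow>'k::field) = sm c (conv op H F)"
  by (auto simp: conv_def fun_eq_iff algebra_simps sum_distrib_left split_beta)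
lemma conv_zero_left[simp]: "conv op 0 H = 0" by (auto simp: conv_def fun_eq_iff)
lemma conv_zero_right[simp]: "conv op H 0 = 0" by (auto simp: conv_def fun_eq_iff)
lemma conv_zero_left'[simp]: "conv op (\<lambda>_. 0) H = 0" by (auto simp: conv_def fun_eq_iff)
lemma conv_zero_right'[simp]: "conv op H (\<lambda>_. 0) = 0" by (auto simp: conv_def fun_eq_iff)
lemma conv_sum_left: "conv op (sum F A) H = (\<Sum>i\<in>A. conv op (F i) H)"
proof (induction A rule: infinite_finite_induct)
  case (insert x A) then show ?case by (simp only: sum.insert[OF insert(1,2)] conv_add_left)
qed auto
lemma conv_sum_right: "conv op H (sum F A) = (\<Sum>i\<in>A. conv op H (F i))"
proof (induction A rule: infinite_finite_induct)
  case (insert x A) then show ?case by (simp only: sum.insert[OF insert(1,2)] conv_add_right)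
qed auto

lemmas fa_mult_simps = fa_mult_conv conv_add_left conv_add_right conv_diff_left conv_diff_right
  conv_sm_left conv_sm_right conv_sum_left conv_sum_right

lemma fa_mult_word: "fa_mult (fa_word u) (fa_word v) = (fa_word (u @ v) :: gen list \<Rightarrow> 'k::field)"
proof
  fix w
  have "conv (@) (fa_word u) (fa_word v) w = (\<Sum>p\<in>{(x,y). x @ y = w}. if p = (u,v) then (1::'k) else 0)"
    unfolding conv_def by (intro sum.cong) (auto simp: fa_word_def split_beta)
  also have "\<dots> = (if w = u @ v then 1 else 0)"
    by (simp add: finite_app_splits)
  finally show "fa_mult (fa_word u) (fa_word v) w = (fa_word (u @ v) :: gen list \<Rightarrow> 'k::field) w"
    by (simp add: fa_mult_conv fa_word_def)
qed

lemma fa_mult_expand: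
  assumes "fsupp f" "fsupp g"
  shows "fa_mult f g = (\<Sum>p\<in>supp f. \<Sum>q\<in>supp g. sm (f p * g q) (fa_word (p @ q) :: gen list \<Rightarrow> 'k::field))"
proof -
  have "fa_mult f g = fa_mult (\<Sum>u\<in>supp f. sm (f u) (fa_word u)) (\<Sum>u\<in>supp g. sm (g u) (fa_word u))"
    using decomp'[OF assms(1)] decomp'[OF assms(2)] by simp
  also have "\<dots> = (\<Sum>p\<in>supp f. \<Sum>q\<in>supp g. sm (f p * g q) (fa_word (p @ q)))"
    apply (simp add: fa_mult_simps fa_mult_word[unfolded fa_mult_conv] sm_sum)
    apply (subst sum.swap)
    apply (simp add: mult.commute)
    done
  finally show ?thesis .
qed

lemma fsupp_mult[simp]: "fsupp f \<Longrightarrow> fsupp g \<Longrightarrow> fsupp (fa_mult f g :: gen list \<Rightarrow> 'k::field)"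
  by (subst fa_mult_expand) auto

lemma fa_mult_one_left[simp]: "fa_mult fa_one f = (f :: gen list \<Rightarrow> 'k::field)"
  by (simp add: fa_mult_def fa_word_def fun_eq_iff sum.atMost_shift)
lemma fa_mult_one_right[simp]: "fa_mult f fa_one = (f :: gen list \<Rightarrow> 'k::field)"
proof
  fix w
  have "fa_mult f fa_one w = (\<Sum>i\<le>length w. if i = length w then f w else 0)"
    unfolding fa_mult_def by (intro sum.cong) (auto simp: fa_word_def)
  thus "fa_mult f fa_one w = f w" by simp
qed

subsection \<open>Linear extensions\<close>

definition LE :: "(gen list \<Rightarrow> 'k::field) \<Rightarrow> (gen list \<Rightarrow> 'k) \<Rightarrow> 'k" where
  "LE L f = (\<Sum>w\<in>supp f. f w * L w)"

lemma LE_S: "finite S \<Longrightarrow> supp f \<subseteq> S \<Longrightarrow> LE L f = (\<Sum>w\<in>S. f w * L w)"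
  unfolding LE_def by (rule sum.mono_neutral_left) (auto simp: supp_def)

lemma LE_add: "fsupp f \<Longrightarrow> fsupp g \<Longrightarrow> LE L (f + g) = LE L f + LE L g"
  apply (subst (1 2 3) LE_S[where S="supp f \<union> supp g"])
  by (auto simp: fsupp_supp supp_def algebra_simps sum.distrib)
lemma LE_diff: "fsupp f \<Longrightarrow> fsupp g \<Longrightarrow> LE L (f - g) = LE L f - LE L g"
  apply (subst (1 2 3) LE_S[where S="supp f \<union> supp g"])
  by (auto simp: fsupp_supp supp_def algebra_simps sum_subtractf)
lemma LE_sm: "fsupp f \<Longrightarrow> LE L (sm c f) = c * LE L f"
  apply (subst (1 2) LE_S[where S="supp f"])
  by (auto simp: fsupp_supp supp_def algebra_simps sum_distrib_left)
lemma LE_zero[simp]: "LE L 0 = 0" "LE L (\<lambda>_. 0) = 0" by (auto simp: LE_def supp_def)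
lemma LE_sum: "(\<And>i. i \<in> A \<Longrightarrow> fsupp (F i)) \<Longrightarrow> LE L (sum F A) = (\<Sum>i\<in>A. LE L (F i))"
  by (induction A rule: infinite_finite_induct) (auto simp: LE_add)
lemma LE_word[simp]: "LE L (fa_word u) = L u"
  by (subst LE_S[where S="{u}"]) (auto simp: supp_def fa_word_def)

lemma LE_mult:
  assumes "fsupp f" "fsupp g"
  shows "LE L (fa_mult f g) = (\<Sum>p\<in>supp f. \<Sum>q\<in>supp g. f p * g q * L (p @ q))"
  by (subst fa_mult_expand[OF assms]) (auto simp: LE_sum LE_sm)

lemma LE_mult_hom:
  assumes "fsupp f" "fsupp g" "\<And>p q. L (p @ q) = L p * L q"
  shows "LE L (fa_mult f g) = LE L f * LE L g"
proof -
  have "LE L (fa_mult f g) = (\<Sum>p\<in>supp f. \<Sum>q\<in>supp g. f p * g q * L (p @ q))" by (rule LE_mult[OF assms(1,2)])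
  also have "\<dots> = (\<Sum>p\<in>supp f. f p * L p) * (\<Sum>q\<in>supp g. g q * L q)"
    by (simp add: sum_product assms(3) algebra_simps)
  also have "\<dots> = LE L f * LE L g" by (simp add: LE_def)
  finally show ?thesis .
qed


lemma lam0: "(\<lambda>_. 0::'k::zero) = 0" by (simp add: zero_fun_def)

lemma fsupp_rels: "r \<in> bplus_rels \<Longrightarrow> fsupp (r :: 'k::field fa)"
  unfolding bplus_rels_def by (auto simp: fa_sub_eq)

lemma fsupp_fa_add: "fsupp f \<Longrightarrow> fsupp g \<Longrightarrow> fsupp (fa_add f (g::'a \<Rightarrow> 'k::field))"
  by (simp add: fa_add_eq)

lemma Bideal_fsupp: "f \<in> Bideal \<Longrightarrow> fsupp (f::'k::field fa)"
  unfolding Bideal_def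
  by (induction rule: ideal_gen.induct) (auto simp: fsupp_rels intro: fsupp_fa_add)

lemma fa_mult_fa_add_right: "fa_mult z (fa_add f g) = fa_add (fa_mult z f) (fa_mult z (g::'k::field fa))"
  by (simp add: fa_add_eq fa_mult_conv conv_add_right)
lemma fa_mult_fa_add_left: "fa_mult (fa_add f g) z = fa_add (fa_mult f z) (fa_mult g (z::'k::field fa))"
  by (simp add: fa_add_eq fa_mult_conv conv_add_left)
lemma sm_fa_add: "sm c (fa_add f g) = fa_add (sm c f) (sm c (g::'k::field fa))"
  by (simp add: fa_add_eq sm_add)
lemma sm_mult3: "sm c (fa_mult (fa_mult x r) y) = fa_mult (fa_mult (sm c x) r) (y::'k::field fa)"
  by (simp add: fa_mult_conv conv_sm_left)

lemma Bideal_zero[simp]: "(0 :: 'k::field fa) \<in> Bideal"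
  using ideal_gen.zero[of "bplus_rels :: 'k fa set"] by (simp add: Bideal_def lam0)

lemma Bideal_add[simp]: "f \<in> Bideal \<Longrightarrow> g \<in> Bideal \<Longrightarrow> f + g \<in> (Bideal :: 'k::field fa set)"
  unfolding Bideal_def using ideal_gen.add by (metis fa_add_eq)

lemma Bideal_gen: "r \<in> bplus_rels \<Longrightarrow> fsupp x \<Longrightarrow> fsupp y \<Longrightarrow> fa_mult (fa_mult x r) y \<in> (Bideal :: 'k::field fa set)"
  unfolding Bideal_def by (rule ideal_gen.gen)

lemma Bideal_sm[simp]: "f \<in> Bideal \<Longrightarrow> sm c f \<in> (Bideal :: 'k::field fa set)"
  unfolding Bideal_def
proof (induction f rule: ideal_gen.induct)
  case (gen r x y)
  then show ?case unfolding sm_mult3 by (intro ideal_gen.gen) auto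
next
  case (add f g) then show ?case unfolding sm_fa_add by (intro ideal_gen.add add.IH)
qed (auto simp: lam0 intro: ideal_gen.zero[unfolded lam0])

lemma Bideal_uminus[simp]: "f \<in> Bideal \<Longrightarrow> - f \<in> (Bideal :: 'k::field fa set)"
proof -
  assume "f \<in> Bideal"
  then have "sm (-1) f \<in> Bideal" by simp
  moreover have "sm (-1) f = - f" by (simp add: fun_eq_iff)
  ultimately show ?thesis by simp
qed

lemma Bideal_diff[simp]: "f \<in> Bideal \<Longrightarrow> g \<in> Bideal \<Longrightarrow> f - g \<in> (Bideal :: 'k::field fa set)"
  by (metis Bideal_add Bideal_uminus diff_conv_add_uminus)

lemma Bideal_sum: "(\<And>i. i \<in> A \<Longrightarrow> F i \<in> Bideal) \<Longrightarrow> sum F A \<in> (Bideal :: 'k::field fa set)"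
  by (induction A rule: infinite_finite_induct) auto

lemma Bideal_mult_left: "f \<in> Bideal \<Longrightarrow> fsupp z \<Longrightarrow> fa_mult z f \<in> (Bideal :: 'k::field fa set)"
  unfolding Bideal_def
proof (induction f rule: ideal_gen.induct)
  case (gen r x y)
  then show ?case using Bideal_gen[of r "fa_mult z x" y] by (simp add: fa_mult_assoc Bideal_def)
next
  case (add f g) then show ?case unfolding fa_mult_fa_add_right by (intro ideal_gen.add) auto
qed (auto simp: lam0 fa_mult_conv intro: ideal_gen.zero[unfolded lam0])

lemma Bideal_mult_right: "f \<in> Bideal \<Longrightarrow> fsupp z \<Longrightarrow> fa_mult f z \<in> (Bideal :: 'k::field fa set)"
  unfolding Bideal_def
proof (induction f rule: ideal_gen.induct)
  case (gen r x y)
  then show ?case using Bideal_gen[of r x "fa_mult y z"] by (simp add: fa_mult_assoc Bideal_def)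
next
  case (add f g) then show ?case unfolding fa_mult_fa_add_left by (intro ideal_gen.add) auto
qed (auto simp: lam0 fa_mult_conv intro: ideal_gen.zero[unfolded lam0])

lemma Bideal_rel: "r \<in> bplus_rels \<Longrightarrow> r \<in> (Bideal :: 'k::field fa set)"
  using Bideal_gen[of r fa_one fa_one] by (simp add: fsupp_rels)

subsection \<open>Word equivalence\<close>

definition weq :: "gen list \<Rightarrow> gen list \<Rightarrow> bool" (infix "\<sim>" 50) where
  "u \<sim> v \<longleftrightarrow> (fa_word u - fa_word v :: real fa) \<in> Bideal"

definition weqk :: "'k::field itself \<Rightarrow> gen list \<Rightarrow> gen list \<Rightarrow> bool" where
  "weqk _ u v \<longleftrightarrow> (fa_word u - fa_word v :: 'k fa) \<in> Bideal"


definition W :: "'k::field itself \<Rightarrow> gen list \<Rightarrow> gen list \<Rightarrow> bool" where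
  "W _ u v \<longleftrightarrow> (fa_word u - fa_word v :: 'k fa) \<in> Bideal"

lemma W_refl[simp]: "W T u u" by (simp add: W_def)
lemma W_sym: "W T u v \<Longrightarrow> W T v u"
  unfolding W_def by (drule Bideal_uminus) simp
lemma W_trans: "W T u v \<Longrightarrow> W T v w \<Longrightarrow> W T u w"
proof -
  assume a: "W T u v" "W T v w"
  have "(fa_word u - fa_word v) + (fa_word v - fa_word w) \<in> (Bideal :: 'a fa set)"
    using a unfolding W_def by (rule Bideal_add)
  then show ?thesis unfolding W_def by simp
qed

lemma fa_mult_diff_left: "fa_mult (f - g) h = fa_mult f h - fa_mult g (h::'k::field fa)"
  by (simp add: fa_mult_conv conv_diff_left)
lemma fa_mult_diff_right: "fa_mult h (f - g) = fa_mult h f - fa_mult h (g::'k::field fa)"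
  by (simp add: fa_mult_conv conv_diff_right)

lemma W_cong: "W (T::'k::field itself) u v \<Longrightarrow> W T (p @ u @ q) (p @ v @ q)"
proof -
  assume "W T u v"
  then have h: "(fa_word u - fa_word v :: 'k fa) \<in> Bideal" by (simp add: W_def)
  have "(fa_word (p @ u @ q) - fa_word (p @ v @ q) :: 'k fa) = fa_mult (fa_mult (fa_word p) (fa_word u - fa_word v)) (fa_word q)"
    by (simp add: fa_mult_diff_left fa_mult_diff_right fa_mult_word)
  also have "\<dots> \<in> Bideal" using h by (intro Bideal_mult_right Bideal_mult_left) auto
  finally show ?thesis by (simp add: W_def)
qed

lemma W_app: "W (T::'k::field itself) u u' \<Longrightarrow> W T v v' \<Longrightarrow> W T (u @ v) (u' @ v')"
proof -
  assume a: "W T u u'" "W T v v'"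
  have 1: "W T (u @ v) (u' @ v)" using W_cong[OF a(1), of "[]" v] by simp
  have 2: "W T (u' @ v) (u' @ v')" using W_cong[OF a(2), of u' "[]"] by simp
  show ?thesis by (rule W_trans[OF 1 2])
qed

lemma W_app3: "W (T::'k::field itself) u u' \<Longrightarrow> W T (p @ u @ q) (p @ u' @ q)"
  by (rule W_cong)

lemma cword: "GC \<in> set w \<Longrightarrow> (fa_word w :: 'k::field fa) \<in> Bideal"
proof -
  assume "GC \<in> set w"
  then obtain p q where w: "w = p @ GC # q" by (meson split_list)
  have "(fa_word w :: 'k fa) = fa_mult (fa_mult (fa_word p) (fa_word [GC])) (fa_word q)"
    by (simp add: w fa_mult_word)
  also have "\<dots> \<in> Bideal" by (rule Bideal_gen) (auto simp: bplus_rels_def)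
  finally show ?thesis .
qed

lemma rel_in: "r \<in> bplus_rels \<Longrightarrow> r \<in> (Bideal :: 'k::field fa set)" by (rule Bideal_rel)

lemma W_ad: "W (T::'k::field itself) [GA,GD] [GDel]"
proof -
  have r: "(fa_word [GA,GD] - fa_word [GC,GB] - fa_word [GDel] :: 'k fa) \<in> Bideal"
    by (rule rel_in) (simp add: bplus_rels_def fa_sub_eq)
  have c: "(fa_word [GC,GB] :: 'k fa) \<in> Bideal" by (rule cword) simp
  from Bideal_add[OF r c] show ?thesis by (simp add: W_def)
qed

lemma W_da: "W (T::'k::field itself) [GD,GA] [GDel]"
proof -
  have r: "(fa_word [GD,GA] - fa_word [GB,GC] - fa_word [GDel] :: 'k fa) \<in> Bideal"
    by (rule rel_in) (simp add: bplus_rels_def fa_sub_eq)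
  have c: "(fa_word [GB,GC] :: 'k fa) \<in> Bideal" by (rule cword) simp
  from Bideal_add[OF r c] show ?thesis by (simp add: W_def)
qed

lemma W_adinv: "W (T::'k::field itself) [GA,GDelInv,GD] []"
proof -
  have r: "(fa_word [GA,GDelInv,GD] - fa_word [GB,GDelInv,GC] - fa_word [] :: 'k fa) \<in> Bideal"
    by (rule rel_in) (simp add: bplus_rels_def fa_sub_eq)
  have c: "(fa_word [GB,GDelInv,GC] :: 'k fa) \<in> Bideal" by (rule cword) simp
  from Bideal_add[OF r c] show ?thesis by (simp add: W_def)
qed

lemma W_dainv: "W (T::'k::field itself) [GD,GDelInv,GA] []"
proof -
  have r: "(fa_word [GD,GDelInv,GA] - fa_word [GC,GDelInv,GB] - fa_word [] :: 'k fa) \<in> Bideal"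
    by (rule rel_in) (simp add: bplus_rels_def fa_sub_eq)
  have c: "(fa_word [GC,GDelInv,GB] :: 'k fa) \<in> Bideal" by (rule cword) simp
  from Bideal_add[OF r c] show ?thesis by (simp add: W_def)
qed

lemma W_ddinv: "W (T::'k::field itself) [GDel,GDelInv] []"
  unfolding W_def by (rule rel_in) (simp add: bplus_rels_def fa_sub_eq)
lemma W_dinvd: "W (T::'k::field itself) [GDelInv,GDel] []"
  unfolding W_def by (rule rel_in) (simp add: bplus_rels_def fa_sub_eq)
lemma W_bd: "W (T::'k::field itself) [GB,GD] [GD,GB]"
  unfolding W_def by (rule rel_in) (simp add: bplus_rels_def fa_sub_eq)
lemma W_bda: "W (T::'k::field itself) [GB,GDelInv,GA] [GA,GDelInv,GB]"
  unfolding W_def by (rule rel_in) (simp add: bplus_rels_def fa_sub_eq)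

lemma W_comm_ad: "W (T::'k::field itself) [GA,GD] [GD,GA]"
  by (rule W_trans[OF W_ad W_sym[OF W_da]])

lemma W_comm_delta_a: "W (T::'k::field itself) [GDel,GA] [GA,GDel]"
proof -
  have 1: "W T [GDel,GA] [GA,GD,GA]" using W_app[OF W_sym[OF W_ad] W_refl, of T "[GA]"] by simp
  have 2: "W T [GA,GD,GA] [GA,GDel]" using W_app[OF W_refl W_da, of T "[GA]"] by simp
  show ?thesis by (rule W_trans[OF 1 2])
qed

lemma W_comm_delta_d: "W (T::'k::field itself) [GDel,GD] [GD,GDel]"
proof -
  have 1: "W T [GDel,GD] [GD,GA,GD]" using W_app[OF W_sym[OF W_da] W_refl, of T "[GD]"] by simp
  have 2: "W T [GD,GA,GD] [GD,GDel]" using W_app[OF W_refl W_ad, of T "[GD]"] by simp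
  show ?thesis by (rule W_trans[OF 1 2])
qed

lemma W_comm_dinv:
  assumes "W (T::'k::field itself) [GDel,x] [x,GDel]"
  shows "W T [GDelInv,x] [x,GDelInv]"
proof -
  have 1: "W T [GDelInv,x] ([GDelInv,x] @ [GDel,GDelInv])"
    using W_app[OF W_refl[of T "[GDelInv,x]"] W_sym[OF W_ddinv[of T]]] by simp
  have 2: "W T [GDelInv,x,GDel,GDelInv] [GDelInv,GDel,x,GDelInv]"
    using W_cong[OF W_sym[OF assms], of "[GDelInv]" "[GDelInv]"] by simp
  have 3: "W T [GDelInv,GDel,x,GDelInv] [x,GDelInv]"
    using W_app[OF W_dinvd W_refl, of T "[x,GDelInv]"] by simp
  show ?thesis using W_trans[OF W_trans[OF 1[simplified] 2] 3] .
qed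


abbreviation "ainv \<equiv> [GDelInv, GD]"
abbreviation "dinv \<equiv> [GDelInv, GA]"

lemma W_tr3: "W T a b \<Longrightarrow> W T b c \<Longrightarrow> W T c d \<Longrightarrow> W T a d"
  by (rule W_trans[OF W_trans])

lemma W_ainv_a: "W (T::'k::field itself) [GDelInv,GD,GA] []"
proof -
  have 1: "W T [GDelInv,GD,GA] [GDelInv,GDel]" using W_app[OF W_refl W_da, of T "[GDelInv]"] by simp
  show ?thesis by (rule W_trans[OF 1 W_dinvd])
qed

lemma W_dinv_d: "W (T::'k::field itself) [GDelInv,GA,GD] []"
proof -
  have 1: "W T [GDelInv,GA,GD] [GDelInv,GDel]" using W_app[OF W_refl W_ad, of T "[GDelInv]"] by simp
  show ?thesis by (rule W_trans[OF 1 W_dinvd])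
qed

definition comm :: "'k::field itself \<Rightarrow> gen list \<Rightarrow> gen list \<Rightarrow> bool" where
  "comm T e x \<longleftrightarrow> W T (e @ x) (x @ e)"

lemma dinv_comm_a: "W (T::'k::field itself) [GDelInv,GA] [GA,GDelInv]"
  by (rule W_comm_dinv[OF W_comm_delta_a])
lemma dinv_comm_d: "W (T::'k::field itself) [GDelInv,GD] [GD,GDelInv]"
  by (rule W_comm_dinv[OF W_comm_delta_d])

lemma comm_d_a: "comm (T::'k::field itself) [GD] [GA]"
  unfolding comm_def using W_sym[OF W_comm_ad] by simp
lemma comm_d_ainv: "comm (T::'k::field itself) [GD] ainv"
  unfolding comm_def using W_app[OF W_sym[OF dinv_comm_d] W_refl, of T "[GD]"] by simp
lemma comm_dinv_a: "comm (T::'k::field itself) dinv [GA]"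
  unfolding comm_def using W_app[OF dinv_comm_a W_refl, of T "[GA]"] by simp
lemma comm_dinv_ainv: "comm (T::'k::field itself) dinv ainv"
proof -
  have 1: "W T [GDelInv,GA,GDelInv,GD] [GDelInv,GDelInv,GA,GD]"
    using W_cong[OF W_sym[OF dinv_comm_a], of T "[GDelInv]" "[GD]"] by simp
  have 2: "W T [GDelInv,GDelInv,GA,GD] [GDelInv,GDelInv,GD,GA]"
    using W_cong[OF W_comm_ad, of T "[GDelInv,GDelInv]" "[]"] by simp
  have 3: "W T [GDelInv,GDelInv,GD,GA] [GDelInv,GD,GDelInv,GA]"
    using W_cong[OF dinv_comm_d, of T "[GDelInv]" "[GA]"] by simp
  show ?thesis unfolding comm_def using W_tr3[OF 1 2 3] by simp
qed

lemma comm_rep: "comm (T::'k::field itself) e x \<Longrightarrow> comm T e (concat (replicate n x))"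
proof (induction n)
  case 0 then show ?case by (simp add: comm_def)
next
  case (Suc n)
  have 1: "W T (e @ x @ concat (replicate n x)) (x @ e @ concat (replicate n x))"
    using W_app[OF Suc.prems[unfolded comm_def] W_refl, of "concat (replicate n x)"] by simp
  have 2: "W T (x @ e @ concat (replicate n x)) (x @ concat (replicate n x) @ e)"
    using W_app[OF W_refl Suc.IH[OF Suc.prems, unfolded comm_def], of x] by simp
  show ?case unfolding comm_def using W_trans[OF 1 2] by simp
qed

lemma rep_GA: "replicate n GA = concat (replicate n [GA])"
  by (induction n) auto
lemma rep_GD: "replicate n GD = concat (replicate n [GD])"
  by (induction n) auto

abbreviation "A \<equiv> a_pow_word"
abbreviation "D \<equiv> d_pow_word"

lemma comm_A: "comm (T::'k::field itself) e [GA] \<Longrightarrow> comm T e ainv \<Longrightarrow> comm T e (A p)"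
  using comm_rep[of T e "[GA]" "nat p"] comm_rep[of T e ainv "nat (-p)"]
  unfolding a_pow_word_def rep_GA[symmetric] by simp


lemma NA1: "W (T::'k::field itself) ([GA] @ A p) (A (p+1))"
proof (cases "p \<ge> 0")
  case True
  then have "nat (p+1) = Suc (nat p)" by simp
  then have "[GA] @ A p = A (p+1)" using True unfolding a_pow_word_def by simp
  then show ?thesis by simp
next
  case False
  then obtain m where m: "nat (-p) = Suc m" by (cases "nat (-p)") auto
  then have 1: "A p = ainv @ concat (replicate m ainv)" using False by (simp add: a_pow_word_def)
  have "nat (- (p+1)) = m" using m by simp
  then have 2: "A (p+1) = concat (replicate m ainv)" using False m by (auto simp: a_pow_word_def)
  show ?thesis unfolding 1 2 using W_app[OF W_adinv W_refl, of T "concat (replicate m ainv)"] by simp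
qed

lemma NA2: "W (T::'k::field itself) (ainv @ A p) (A (p-1))"
proof (cases "p > 0")
  case True
  then obtain m where m: "nat p = Suc m" by (cases "nat p") auto
  then have 1: "A p = [GA] @ replicate m GA" using True by (simp add: a_pow_word_def)
  have "nat (p-1) = m" using m by simp
  then have 2: "A (p-1) = replicate m GA" using True by (simp add: a_pow_word_def)
  show ?thesis unfolding 1 2 using W_app[OF W_ainv_a W_refl, of T "replicate m GA"] by simp
next
  case False
  then have "nat (-(p-1)) = Suc (nat (-p))" by simp
  then have "ainv @ A p = A (p-1)" using False unfolding a_pow_word_def by simp
  then show ?thesis by simp
qed

lemma ND1: "W (T::'k::field itself) ([GD] @ D q) (D (q+1))"
proof (cases "q \<ge> 0")
  case True
  then have "nat (q+1) = Suc (nat q)" by simp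
  then have "[GD] @ D q = D (q+1)" using True unfolding d_pow_word_def by simp
  then show ?thesis by simp
next
  case False
  then obtain m where m: "nat (-q) = Suc m" by (cases "nat (-q)") auto
  then have 1: "D q = dinv @ concat (replicate m dinv)" using False by (simp add: d_pow_word_def)
  have "nat (- (q+1)) = m" using m by simp
  then have 2: "D (q+1) = concat (replicate m dinv)" using False m by (auto simp: d_pow_word_def)
  show ?thesis unfolding 1 2 using W_app[OF W_dainv W_refl, of T "concat (replicate m dinv)"] by simp
qed

lemma ND2: "W (T::'k::field itself) (dinv @ D q) (D (q-1))"
proof (cases "q > 0")
  case True
  then obtain m where m: "nat q = Suc m" by (cases "nat q") auto
  then have 1: "D q = [GD] @ replicate m GD" using True by (simp add: d_pow_word_def)
  have "nat (q-1) = m" using m by simp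
  then have 2: "D (q-1) = replicate m GD" using True by (simp add: d_pow_word_def)
  show ?thesis unfolding 1 2 using W_app[OF W_dinv_d W_refl, of T "replicate m GD"] by simp
next
  case False
  then have "nat (-(q-1)) = Suc (nat (-q))" by simp
  then have "dinv @ D q = D (q-1)" using False unfolding d_pow_word_def by simp
  then show ?thesis by simp
qed

lemma stepA: "W (T::'k::field itself) ([GA] @ A p @ D q) (A (p+1) @ D q)"
  using W_app[OF NA1 W_refl, of T p "D q"] by simp
lemma stepAinv: "W (T::'k::field itself) (ainv @ A p @ D q) (A (p-1) @ D q)"
  using W_app[OF NA2 W_refl, of T p "D q"] by simp
lemma stepD: "W (T::'k::field itself) ([GD] @ A p @ D q) (A p @ D (q+1))"
proof -
  have 1: "W T ([GD] @ A p @ D q) (A p @ [GD] @ D q)"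
    using W_app[OF comm_A[OF comm_d_a comm_d_ainv, of T p, unfolded comm_def] W_refl, of "D q"] by simp
  have 2: "W T (A p @ [GD] @ D q) (A p @ D (q+1))"
    using W_app[OF W_refl ND1, of T "A p" q] by simp
  show ?thesis by (rule W_trans[OF 1 2])
qed
lemma stepDinv: "W (T::'k::field itself) (dinv @ A p @ D q) (A p @ D (q-1))"
proof -
  have 1: "W T (dinv @ A p @ D q) (A p @ dinv @ D q)"
    using W_app[OF comm_A[OF comm_dinv_a comm_dinv_ainv, of T p, unfolded comm_def] W_refl, of "D q"] by simp
  have 2: "W T (A p @ dinv @ D q) (A p @ D (q-1))"
    using W_app[OF W_refl ND2, of T "A p" q] by simp
  show ?thesis by (rule W_trans[OF 1 2])
qed

lemma W_dinv_split: "W (T::'k::field itself) [GDelInv] (ainv @ dinv)"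
proof -
  have 1: "W T [GDelInv,GD,GDelInv,GA] [GDelInv,GDelInv,GD,GA]"
    using W_cong[OF W_sym[OF dinv_comm_d], of T "[GDelInv]" "[GA]"] by simp
  have 2: "W T [GDelInv,GDelInv,GD,GA] [GDelInv,GDelInv,GDel]"
    using W_cong[OF W_da, of T "[GDelInv,GDelInv]" "[]"] by simp
  have 3: "W T [GDelInv,GDelInv,GDel] [GDelInv]"
    using W_cong[OF W_dinvd, of T "[GDelInv]" "[]"] by simp
  show ?thesis using W_sym[OF W_tr3[OF 1 2 3]] by simp
qed

fun la :: "gen \<Rightarrow> int" where
  "la GA = 1" | "la GB = 0" | "la GC = 1" | "la GD = 0" | "la GDel = 1" | "la GDelInv = -1"
fun ld :: "gen \<Rightarrow> int" where
  "ld GA = 0" | "ld GB = 1" | "ld GC = 0" | "ld GD = 1" | "ld GDel = 1" | "ld GDelInv = -1"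
definition wa :: "gen list \<Rightarrow> int" where "wa w = sum_list (map la w)"
definition wd :: "gen list \<Rightarrow> int" where "wd w = sum_list (map ld w)"

lemma NF: "set w \<subseteq> {GA,GD,GDel,GDelInv} \<Longrightarrow> W (T::'k::field itself) w (A (wa w) @ D (wd w))"
proof (induction w)
  case Nil then show ?case by (simp add: wa_def wd_def a_pow_word_def d_pow_word_def)
next
  case (Cons x w)
  let ?p = "wa w" and ?q = "wd w"
  have IH: "W T w (A ?p @ D ?q)" using Cons by simp
  have 0: "W T (x # w) ([x] @ A ?p @ D ?q)" using W_app[OF W_refl IH, of "[x]"] by simp
  have "x \<in> {GA,GD,GDel,GDelInv}" using Cons.prems by simp
  then have "W T ([x] @ A ?p @ D ?q) (A (?p + la x) @ D (?q + ld x))"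
  proof (elim insertE)
    assume x: "x = GA" show ?thesis using stepA[of T ?p ?q] by (simp add: x)
  next
    assume x: "x = GD" show ?thesis using stepD[of T ?p ?q] by (simp add: x)
  next
    assume x: "x = GDel"
    have 1: "W T ([GDel] @ A ?p @ D ?q) ([GA] @ [GD] @ A ?p @ D ?q)"
      using W_app[OF W_sym[OF W_ad] W_refl, of T "A ?p @ D ?q"] by simp
    have 2: "W T ([GA] @ [GD] @ A ?p @ D ?q) ([GA] @ A ?p @ D (?q+1))"
      by (rule W_app[OF W_refl stepD])
    have 3: "W T ([GA] @ A ?p @ D (?q+1)) (A (?p+1) @ D (?q+1))" by (rule stepA)
    show ?thesis using W_tr3[OF 1 2 3] by (simp add: x)
  next
    assume x: "x = GDelInv"
    have 1: "W T ([GDelInv] @ A ?p @ D ?q) (ainv @ dinv @ A ?p @ D ?q)"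
      using W_app[OF W_dinv_split W_refl, of T "A ?p @ D ?q"] by simp
    have 2: "W T (ainv @ dinv @ A ?p @ D ?q) (ainv @ A ?p @ D (?q-1))"
      by (rule W_app[OF W_refl stepDinv])
    have 3: "W T (ainv @ A ?p @ D (?q-1)) (A (?p-1) @ D (?q-1))" by (rule stepAinv)
    show ?thesis using W_tr3[OF 1 2 3] by (simp add: x)
  qed simp
  then show ?case using W_trans[OF 0] by (simp add: wa_def wd_def add.commute)
qed


fun lb :: "gen \<Rightarrow> int" where
  "lb GB = 1" | "lb GC = -1" | "lb GA = 0" | "lb GD = 0" | "lb GDel = 0" | "lb GDelInv = 0"
definition nbc :: "gen list \<Rightarrow> int" where "nbc w = sum_list (map lb w)"

definition cls :: "gen list \<Rightarrow> int \<times> int \<times> int" where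
  "cls w = (nbc w, wa w, wd w)"

lemma cls_append[simp]: "cls (u @ v) = cls u + cls v"
  by (simp add: cls_def nbc_def wa_def wd_def)
lemma cls_Nil[simp]: "cls [] = 0"
  by (simp add: cls_def nbc_def wa_def wd_def zero_prod_def)

definition hom :: "int \<times> int \<times> int \<Rightarrow> 'k::field fa \<Rightarrow> bool" where
  "hom K f \<longleftrightarrow> (\<forall>w. f w \<noteq> 0 \<longrightarrow> cls w = K)"

lemma hom_word: "hom (cls u) (fa_word u :: 'k::field fa)"
  by (simp add: hom_def fa_word_def)
lemma hom_word': "cls u = K \<Longrightarrow> hom K (fa_word u :: 'k::field fa)"
  by (simp add: hom_def fa_word_def)
lemma hom_diff: "hom K f \<Longrightarrow> hom K g \<Longrightarrow> hom K (f - g :: 'k::field fa)"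
  unfolding hom_def
proof (intro allI impI)
  fix w assume "\<forall>w. f w \<noteq> 0 \<longrightarrow> cls w = K" "\<forall>w. g w \<noteq> 0 \<longrightarrow> cls w = K" "(f - g) w \<noteq> 0"
  then show "cls w = K" by (cases "f w = 0") auto
qed
lemma hom_mult: "hom K f \<Longrightarrow> hom K' g \<Longrightarrow> hom (K + K') (fa_mult f g :: 'k::field fa)"
proof (unfold hom_def, intro allI impI)
  fix w assume f: "\<forall>w. f w \<noteq> 0 \<longrightarrow> cls w = K" and g: "\<forall>w. g w \<noteq> 0 \<longrightarrow> cls w = K'"
    and "fa_mult f g w \<noteq> 0"
  then have "(\<Sum>(x,y)\<in>{(x,y). x @ y = w}. f x * g y) \<noteq> 0" by (simp add: fa_mult_conv conv_def)
  then obtain pr where pr: "pr \<in> {(x,y). x @ y = w}" "(case pr of (x,y) \<Rightarrow> f x * g y) \<noteq> 0"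
    by (rule sum.not_neutral_contains_not_neutral)
  obtain x y where "pr = (x,y)" by (cases pr)
  with pr have "x @ y = w" "f x * g y \<noteq> 0" by auto
  then show "cls w = K + K'" using f g by auto
qed

lemma hom_word_diff: "cls u = cls v \<Longrightarrow> hom (cls u) (fa_word u - fa_word v :: 'k::field fa)"
  by (intro hom_diff hom_word') auto
lemma hom_word_diff3: "cls u = cls v \<Longrightarrow> cls u = cls w \<Longrightarrow> hom (cls u) (fa_word u - fa_word v - fa_word w :: 'k::field fa)"
  by (intro hom_diff hom_word') auto

lemma hom_rels: "r \<in> bplus_rels \<Longrightarrow> \<exists>K. hom K (r :: 'k::field fa)"
  unfolding bplus_rels_def fa_sub_eq
  by (elim insertE emptyE; hypsubst; rule exI; rule hom_word_diff hom_word_diff3 hom_word; simp add: cls_def nbc_def wa_def wd_def zero_prod_def)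

definition proj :: "int \<times> int \<times> int \<Rightarrow> 'k::field fa \<Rightarrow> 'k fa" where
  "proj K f = (\<lambda>w. if cls w = K then f w else 0)"

lemma proj_add: "proj K (f + g) = proj K f + proj K g" by (auto simp: proj_def fun_eq_iff)
lemma proj_fa_add: "proj K (fa_add f g) = fa_add (proj K f) (proj K g)" by (auto simp: proj_def fa_add_def fun_eq_iff)
lemma proj_sm: "proj K (sm c f) = sm c (proj K f)" by (auto simp: proj_def sm_def fun_eq_iff)
lemma proj_sum: "proj K (sum F S) = (\<Sum>i\<in>S. proj K (F i))"
  by (auto simp: proj_def fun_eq_iff fun_sum_apply)
lemma proj_hom: "hom K' f \<Longrightarrow> proj K f = (if K' = K then f else 0)"
  by (auto simp: proj_def hom_def fun_eq_iff)

lemma mult3_expand: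
  assumes "fsupp x" "fsupp y"
  shows "fa_mult (fa_mult x r) y = (\<Sum>p\<in>supp x. \<Sum>q\<in>supp y. sm (x p * y q) (fa_mult (fa_mult (fa_word p) r) (fa_word q)) :: 'k::field fa)"
proof -
  have "fa_mult (fa_mult x r) y = fa_mult (fa_mult (\<Sum>u\<in>supp x. sm (x u) (fa_word u)) r) (\<Sum>u\<in>supp y. sm (y u) (fa_word u))"
    using decomp'[OF assms(1)] decomp'[OF assms(2)] by simp
  also have "\<dots> = (\<Sum>p\<in>supp x. \<Sum>q\<in>supp y. sm (x p * y q) (fa_mult (fa_mult (fa_word p) r) (fa_word q)))"
    apply (simp only: fa_mult_conv conv_sum_left conv_sum_right conv_sm_left conv_sm_right sm_sum sm_sm)
    apply (subst sum.swap)
    apply (simp add: mult.commute)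
    done
  finally show ?thesis .
qed

lemma proj_Bideal: "f \<in> Bideal \<Longrightarrow> proj K f \<in> (Bideal :: 'k::field fa set)"
  unfolding Bideal_def
proof (induction f rule: ideal_gen.induct)
  case zero then show ?case using ideal_gen.zero by (simp add: proj_def)
next
  case (add f g) then show ?case unfolding proj_fa_add by (intro ideal_gen.add add.IH)
next
  case (gen r x y)
  obtain K' where h: "hom K' (r :: 'k fa)" using hom_rels[OF gen(1)] by blast
  have "proj K (fa_mult (fa_mult x r) y) = (\<Sum>p\<in>supp x. \<Sum>q\<in>supp y. sm (x p * y q) (proj K (fa_mult (fa_mult (fa_word p) r) (fa_word q))))"
    by (simp add: mult3_expand[OF gen(2,3)] proj_sum proj_sm)
  also have "\<dots> \<in> Bideal"
  proof (intro Bideal_sum Bideal_sm)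
    fix p q
    have "hom (cls p + K' + cls q) (fa_mult (fa_mult (fa_word p) r) (fa_word q))"
      by (intro hom_mult hom_word h)
    then show "proj K (fa_mult (fa_mult (fa_word p) r) (fa_word q)) \<in> Bideal"
      by (simp add: proj_hom Bideal_gen gen(1))
  qed
  finally show ?case unfolding Bideal_def .
qed

definition cpart :: "'k::field fa \<Rightarrow> 'k fa" where
  "cpart f = (\<lambda>w. if GC \<in> set w then f w else 0)"

lemma cpart_Bideal: "fsupp f \<Longrightarrow> cpart f \<in> (Bideal :: 'k::field fa set)"
proof -
  assume "fsupp f"
  then have fs: "fsupp (cpart f)" unfolding fsupp_def cpart_def
    by (rule finite_subset[rotated]) auto
  have "cpart f = (\<Sum>u\<in>supp (cpart f). sm (cpart f u) (fa_word u))" by (rule decomp'[OF fs])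
  also have "\<dots> \<in> Bideal"
    by (intro Bideal_sum Bideal_sm cword) (auto simp: supp_def cpart_def split: if_splits)
  finally show ?thesis .
qed

definition proj' :: "int \<times> int \<times> int \<Rightarrow> 'k::field fa \<Rightarrow> 'k fa" where
  "proj' K f = (\<lambda>w. if cls w = K \<and> GC \<notin> set w then f w else 0)"

lemma proj'_eq: "proj' K f = proj K f - cpart (proj K f)"
  by (auto simp: proj'_def proj_def cpart_def fun_eq_iff)

lemma fsupp_proj[simp]: "fsupp f \<Longrightarrow> fsupp (proj K f)"
  unfolding fsupp_def proj_def by (rule finite_subset[rotated]) auto
lemma fsupp_proj'[simp]: "fsupp f \<Longrightarrow> fsupp (proj' K f)"
  unfolding fsupp_def proj'_def by (rule finite_subset[rotated]) auto

lemma proj'_Bideal: "f \<in> Bideal \<Longrightarrow> proj' K f \<in> (Bideal :: 'k::field fa set)"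
proof -
  assume a: "f \<in> Bideal"
  have 1: "proj K f \<in> (Bideal :: 'k fa set)" by (rule proj_Bideal[OF a])
  have 2: "cpart (proj K f) \<in> (Bideal :: 'k fa set)" by (rule cpart_Bideal[OF Bideal_fsupp[OF 1]])
  show ?thesis unfolding proj'_eq by (rule Bideal_diff[OF 1 2])
qed

lemma decomp_cls:
  assumes "fsupp f"
  shows "f = cpart f + (\<Sum>K\<in>cls ` supp f. proj' K (f :: 'k::field fa))"
proof
  fix w
  have fin: "finite (cls ` supp f)" using assms by (simp add: fsupp_supp)
  have "(\<Sum>K\<in>cls ` supp f. proj' K f) w = (\<Sum>K\<in>cls ` supp f. if cls w = K then (if GC \<notin> set w then f w else 0) else 0)"
    by (simp add: fun_sum_apply proj'_def)
  also have "\<dots> = (if cls w \<in> cls ` supp f \<and> GC \<notin> set w then f w else 0)"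
    using fin by (simp add: sum.delta')
  finally show "f w = (cpart f + (\<Sum>K\<in>cls ` supp f. proj' K f)) w"
    by (auto simp: cpart_def supp_def)
qed


subsection \<open>fa2 algebra\<close>

lemma fa_tensor_mult: "fa2_mult (fa_tensor p q) (fa_tensor p' q') = fa_tensor (fa_mult p p') (fa_mult q (q'::'k::field fa))"
  by (auto simp: fa2_mult_def fa_tensor_def fa_mult_def fun_eq_iff sum_product algebra_simps intro!: sum.cong)

lemma fa_tensor_word: "fa2_mult (fa_tensor (fa_word a) (fa_word b)) (fa_tensor (fa_word c) (fa_word d)) = (fa_tensor (fa_word (a@c)) (fa_word (b@d)) :: 'k::field fa2)"
  by (simp add: fa_tensor_mult fa_mult_word)

lemmas fa2_mult_simps = fa2_mult_conv conv_add_left conv_add_right conv_diff_left conv_diff_right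
  conv_sm_left conv_sm_right conv_sum_left conv_sum_right

lemma fa2_mult_add_left: "fa2_mult (P + Q) R = fa2_mult P R + fa2_mult Q (R::'k::field fa2)"
  by (simp add: fa2_mult_simps)
lemma fa2_mult_add_right: "fa2_mult R (P + Q) = fa2_mult R P + fa2_mult R (Q::'k::field fa2)"
  by (simp add: fa2_mult_simps)
lemma fa2_mult_diff_left: "fa2_mult (P - Q) R = fa2_mult P R - fa2_mult Q (R::'k::field fa2)"
  by (simp add: fa2_mult_simps)
lemma fa2_mult_diff_right: "fa2_mult R (P - Q) = fa2_mult R P - fa2_mult R (Q::'k::field fa2)"
  by (simp add: fa2_mult_simps)
lemma fa2_mult_sm_left: "fa2_mult (sm c P) R = sm c (fa2_mult P (R::'k::field fa2))"
  by (simp add: fa2_mult_simps)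
lemma fa2_mult_sm_right: "fa2_mult R (sm c P) = sm c (fa2_mult R (P::'k::field fa2))"
  by (simp add: fa2_mult_simps)
lemma fa2_mult_sum_left: "fa2_mult (sum F S) R = (\<Sum>i\<in>S. fa2_mult (F i) (R::'k::field fa2))"
  by (simp add: fa2_mult_simps)
lemma fa2_mult_sum_right: "fa2_mult R (sum F S) = (\<Sum>i\<in>S. fa2_mult R (F i :: 'k::field fa2))"
  by (simp add: fa2_mult_simps)
lemma fa2_mult_zero[simp]: "fa2_mult 0 R = 0" "fa2_mult R 0 = (0::'k::field fa2)"
  by (simp_all add: fa2_mult_simps)

lemma fa2_one_left[simp]: "fa2_mult fa2_one P = (P :: 'k::field fa2)"
proof
  fix z :: "gen list \<times> gen list"
  obtain u v where z: "z = (u,v)" by (cases z)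
  have "fa2_mult fa2_one P (u,v) = (\<Sum>i\<le>length u. \<Sum>j\<le>length v. if i = 0 \<and> j = 0 then P (u,v) else 0)"
    unfolding fa2_mult_def fa2_one_def fa_tensor_def fa_word_def prod.case
    by (intro sum.cong refl) auto
  also have "\<dots> = (\<Sum>i\<le>length u. if i = 0 then P (u,v) else 0)"
    by (intro sum.cong refl) auto
  also have "\<dots> = P (u,v)" by simp
  finally show "fa2_mult fa2_one P z = P z" by (simp add: z)
qed

lemma fa_tensor_add_left: "fa_tensor (p + p') q = fa_tensor p q + fa_tensor p' (q::'k::field fa)"
  by (auto simp: fa_tensor_def fun_eq_iff algebra_simps)
lemma fa_tensor_add_right: "fa_tensor p (q + q') = fa_tensor p q + fa_tensor p (q'::'k::field fa)"
  by (auto simp: fa_tensor_def fun_eq_iff algebra_simps)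
lemma fa_tensor_diff_left: "fa_tensor (p - p') q = fa_tensor p q - fa_tensor p' (q::'k::field fa)"
  by (auto simp: fa_tensor_def fun_eq_iff algebra_simps)
lemma fa_tensor_diff_right: "fa_tensor p (q - q') = fa_tensor p q - fa_tensor p (q'::'k::field fa)"
  by (auto simp: fa_tensor_def fun_eq_iff algebra_simps)
lemma fa_tensor_sm_left: "fa_tensor (sm c p) q = sm c (fa_tensor p (q::'k::field fa))"
  by (auto simp: fa_tensor_def fun_eq_iff algebra_simps)
lemma fa_tensor_sm_right: "fa_tensor p (sm c q) = sm c (fa_tensor p (q::'k::field fa))"
  by (auto simp: fa_tensor_def fun_eq_iff algebra_simps)
lemma fa_tensor_zero[simp]: "fa_tensor 0 q = 0" "fa_tensor p 0 = (0::'k::field fa2)"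
  by (auto simp: fa_tensor_def fun_eq_iff)

lemma fsupp_tensor[simp]: "fsupp p \<Longrightarrow> fsupp q \<Longrightarrow> fsupp (fa_tensor p (q::'k::field fa))"
  unfolding fsupp_def fa_tensor_def
  by (rule finite_subset[of _ "{x. p x \<noteq> 0} \<times> {x. q x \<noteq> 0}"]) auto

lemma decomp2:
  assumes "fsupp P"
  shows "P = (\<Sum>z\<in>supp P. sm (P z) (fa_tensor (fa_word (fst z)) (fa_word (snd z))) :: 'k::field fa2)"
proof
  fix z0
  have "(\<Sum>z\<in>supp P. sm (P z) (fa_tensor (fa_word (fst z)) (fa_word (snd z))) :: 'k::field fa2) z0
     = (\<Sum>z\<in>supp P. if z = z0 then P z else 0)"
    unfolding fun_sum_apply by (intro sum.cong refl) (cases z0, auto simp: fa_tensor_def fa_word_def split_beta prod_eq_iff)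
  also have "\<dots> = P z0" using assms by (auto simp: supp_def fsupp_supp)
  finally show "P z0 = (\<Sum>z\<in>supp P. sm (P z) (fa_tensor (fa_word (fst z)) (fa_word (snd z)))) z0" by simp
qed

lemma fsupp2_mult[simp]:
  assumes "fsupp P" "fsupp Q"
  shows "fsupp (fa2_mult P (Q :: 'k::field fa2))"
proof -
  have eq: "fa2_mult P Q = fa2_mult (\<Sum>z\<in>supp P. sm (P z) (fa_tensor (fa_word (fst z)) (fa_word (snd z))))
                                  (\<Sum>z\<in>supp Q. sm (Q z) (fa_tensor (fa_word (fst z)) (fa_word (snd z))))"
    using decomp2[OF assms(1)] decomp2[OF assms(2)] by simp
  show ?thesis unfolding eq
    by (simp add: fa2_mult_sum_left fa2_mult_sum_right fa2_mult_sm_left fa2_mult_sm_right fa_tensor_word)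
qed

subsection \<open>Tensor ideal\<close>

abbreviation TI :: "'k::field fa2 set" where "TI \<equiv> tensor_ideal Bideal"

lemma TI_zero[simp]: "0 \<in> TI"
  using tensor_ideal.zero by (simp add: lam0)
lemma TI_add[simp]: "P \<in> TI \<Longrightarrow> Q \<in> TI \<Longrightarrow> P + Q \<in> TI"
  using tensor_ideal.add by (metis fa_add_eq)
lemma TI_left: "p \<in> Bideal \<Longrightarrow> fsupp q \<Longrightarrow> fa_tensor p q \<in> TI"
  by (rule tensor_ideal.left)
lemma TI_right: "fsupp p \<Longrightarrow> q \<in> Bideal \<Longrightarrow> fa_tensor p q \<in> TI"
  by (rule tensor_ideal.right)

lemma TI_sm[simp]: "P \<in> TI \<Longrightarrow> sm c P \<in> (TI :: 'k::field fa2 set)"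
proof (induction P rule: tensor_ideal.induct)
  case zero then show ?case by (simp add: lam0)
next
  case (left p q) then show ?case unfolding fa_tensor_sm_left[symmetric] by (intro TI_left) auto
next
  case (right p q) then show ?case unfolding fa_tensor_sm_right[symmetric] by (intro TI_right) auto
next
  case (add P Q) then show ?case unfolding fa_add_eq sm_add by (intro TI_add add.IH)
qed

lemma TI_uminus[simp]: "P \<in> TI \<Longrightarrow> - P \<in> (TI :: 'k::field fa2 set)"
proof -
  assume "P \<in> TI"
  then have "sm (-1) P \<in> TI" by simp
  moreover have "sm (-1) P = - P" by (simp add: fun_eq_iff)
  ultimately show ?thesis by simp
qed

lemma TI_diff[simp]: "P \<in> TI \<Longrightarrow> Q \<in> TI \<Longrightarrow> P - Q \<in> (TI :: 'k::field fa2 set)"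
  unfolding diff_conv_add_uminus by (intro TI_add TI_uminus)

lemma TI_sum: "(\<And>i. i \<in> S \<Longrightarrow> F i \<in> TI) \<Longrightarrow> sum F S \<in> (TI :: 'k::field fa2 set)"
  by (induction S rule: infinite_finite_induct) auto

lemma TI_fsupp: "P \<in> TI \<Longrightarrow> fsupp (P :: 'k::field fa2)"
  by (induction P rule: tensor_ideal.induct) (auto simp: Bideal_fsupp intro: fsupp_fa_add)

lemma TI_mult_left:
  assumes "P \<in> TI" "fsupp Z"
  shows "fa2_mult Z P \<in> (TI :: 'k::field fa2 set)"
  using assms(1)
proof (induction P rule: tensor_ideal.induct)
  case zero then show ?case by (simp add: lam0)
next
  case (left p q)
  have "fa2_mult Z (fa_tensor p q) = (\<Sum>z\<in>supp Z. sm (Z z) (fa_tensor (fa_mult (fa_word (fst z)) p) (fa_mult (fa_word (snd z)) q)))"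
    by (subst decomp2[OF assms(2)]) (simp add: fa2_mult_sum_left fa2_mult_sm_left fa_tensor_mult)
  also have "\<dots> \<in> TI" using left by (intro TI_sum TI_sm TI_left Bideal_mult_left) auto
  finally show ?case .
next
  case (right p q)
  have "fa2_mult Z (fa_tensor p q) = (\<Sum>z\<in>supp Z. sm (Z z) (fa_tensor (fa_mult (fa_word (fst z)) p) (fa_mult (fa_word (snd z)) q)))"
    by (subst decomp2[OF assms(2)]) (simp add: fa2_mult_sum_left fa2_mult_sm_left fa_tensor_mult)
  also have "\<dots> \<in> TI" using right by (intro TI_sum TI_sm TI_right Bideal_mult_left) auto
  finally show ?case .
next
  case (add P Q) then show ?case unfolding fa_add_eq fa2_mult_add_right by (intro TI_add add.IH)
qed

lemma TI_mult_right:
  assumes "P \<in> TI" "fsupp Z"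
  shows "fa2_mult P Z \<in> (TI :: 'k::field fa2 set)"
  using assms(1)
proof (induction P rule: tensor_ideal.induct)
  case zero then show ?case by (simp add: lam0)
next
  case (left p q)
  have "fa2_mult (fa_tensor p q) Z = (\<Sum>z\<in>supp Z. sm (Z z) (fa_tensor (fa_mult p (fa_word (fst z))) (fa_mult q (fa_word (snd z)))))"
    by (subst decomp2[OF assms(2)]) (simp add: fa2_mult_sum_right fa2_mult_sm_right fa_tensor_mult)
  also have "\<dots> \<in> TI" using left by (intro TI_sum TI_sm TI_left Bideal_mult_right) auto
  finally show ?case .
next
  case (right p q)
  have "fa2_mult (fa_tensor p q) Z = (\<Sum>z\<in>supp Z. sm (Z z) (fa_tensor (fa_mult p (fa_word (fst z))) (fa_mult q (fa_word (snd z)))))"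
    by (subst decomp2[OF assms(2)]) (simp add: fa2_mult_sum_right fa2_mult_sm_right fa_tensor_mult)
  also have "\<dots> \<in> TI" using right by (intro TI_sum TI_sm TI_right Bideal_mult_right) auto
  finally show ?case .
next
  case (add P Q) then show ?case unfolding fa_add_eq fa2_mult_add_left by (intro TI_add add.IH)
qed


lemma fsupp_delta_gen[simp]: "fsupp (delta_gen x :: 'k::field fa2)"
  by (cases x) (auto intro!: fsupp_fa_add)

declare delta_gen.simps[simp del]

lemma dw_Nil[simp]: "delta_word [] = fa2_one" by (simp add: delta_word_def)
lemma dw_Cons: "delta_word (x # w) = fa2_mult (delta_gen x) (delta_word w)" by (simp add: delta_word_def)

lemma fsupp_fa2_one[simp]: "fsupp (fa2_one :: 'k::field fa2)" by (simp add: fa2_one_def)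

lemma fsupp_dw[simp]: "fsupp (delta_word w :: 'k::field fa2)"
  by (induction w) (auto simp: dw_Cons)

lemma dw_append: "delta_word (u @ v) = fa2_mult (delta_word u) (delta_word v :: 'k::field fa2)"
  by (induction u) (auto simp: dw_Cons fa2_mult_assoc)

lemma fa_Delta_S: "finite S \<Longrightarrow> supp f \<subseteq> S \<Longrightarrow> fa_Delta f = (\<Sum>w\<in>S. sm (f w) (delta_word w :: 'k::field fa2))"
proof -
  assume a: "finite S" "supp f \<subseteq> S"
  show ?thesis
  proof
    fix uv
    have "fa_Delta f uv = (\<Sum>w\<in>supp f. f w * delta_word w uv)" by (simp add: fa_Delta_def supp_def)
    also have "\<dots> = (\<Sum>w\<in>S. f w * delta_word w uv)"
      using a by (intro sum.mono_neutral_left) (auto simp: supp_def)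
    finally show "fa_Delta f uv = (\<Sum>w\<in>S. sm (f w) (delta_word w :: 'k::field fa2)) uv"
      by (simp add: fun_sum_apply)
  qed
qed

lemma fa_Delta_add: "fsupp f \<Longrightarrow> fsupp g \<Longrightarrow> fa_Delta (f + g) = fa_Delta f + fa_Delta (g :: 'k::field fa)"
  apply (subst (1 2 3) fa_Delta_S[where S="supp f \<union> supp g"])
  by (auto simp: fsupp_supp supp_def sm_add sum.distrib fun_eq_iff algebra_simps fun_sum_apply)
lemma fa_Delta_diff: "fsupp f \<Longrightarrow> fsupp g \<Longrightarrow> fa_Delta (f - g) = fa_Delta f - fa_Delta (g :: 'k::field fa)"
  apply (subst (1 2 3) fa_Delta_S[where S="supp f \<union> supp g"])
  by (auto simp: fsupp_supp supp_def fun_eq_iff algebra_simps fun_sum_apply sum_subtractf)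
lemma fa_Delta_sm: "fsupp f \<Longrightarrow> fa_Delta (sm c f) = sm c (fa_Delta (f :: 'k::field fa))"
  apply (subst (1 2) fa_Delta_S[where S="supp f"])
  by (auto simp: fsupp_supp supp_def fun_eq_iff algebra_simps fun_sum_apply sum_distrib_left)
lemma fa_Delta_zero[simp]: "fa_Delta (0::'k::field fa) = 0"
  by (simp add: fa_Delta_def fun_eq_iff)
lemma fa_Delta_sum: "(\<And>i. i \<in> S \<Longrightarrow> fsupp (F i)) \<Longrightarrow> fa_Delta (sum F S) = (\<Sum>i\<in>S. fa_Delta (F i :: 'k::field fa))"
  by (induction S rule: infinite_finite_induct) (auto simp: fa_Delta_add)
lemma fa_Delta_word[simp]: "fa_Delta (fa_word u) = (delta_word u :: 'k::field fa2)"
  by (subst fa_Delta_S[where S="{u}"]) (auto simp: supp_def fa_word_def)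

lemma fa_Delta_mult:
  assumes "fsupp f" "fsupp g"
  shows "fa_Delta (fa_mult f g) = fa2_mult (fa_Delta f) (fa_Delta (g :: 'k::field fa))"
proof -
  have "fa_Delta (fa_mult f g) = (\<Sum>p\<in>supp f. \<Sum>q\<in>supp g. sm (f p * g q) (fa2_mult (delta_word p) (delta_word q)))"
    by (subst fa_mult_expand[OF assms]) (simp add: fa_Delta_sum fa_Delta_sm dw_append)
  also have "\<dots> = fa2_mult (\<Sum>p\<in>supp f. sm (f p) (delta_word p)) (\<Sum>q\<in>supp g. sm (g q) (delta_word q))"
    apply (simp add: fa2_mult_sum_left fa2_mult_sum_right fa2_mult_sm_left fa2_mult_sm_right sm_sum)
    apply (subst (2) sum.swap)
    apply (simp add: mult.commute)
    done
  also have "\<dots> = fa2_mult (fa_Delta f) (fa_Delta g)"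
    using assms by (simp add: fa_Delta_S[where S="supp f"] fa_Delta_S[where S="supp g"] fsupp_supp)
  finally show ?thesis .
qed

subsection \<open>Congruence modulo TI\<close>

definition te :: "'k::field fa2 \<Rightarrow> 'k fa2 \<Rightarrow> bool" where
  "te P Q \<longleftrightarrow> P - Q \<in> TI"

lemma te_refl[simp]: "te P P" by (simp add: te_def)
lemma te_sym: "te P Q \<Longrightarrow> te Q P"
  unfolding te_def by (drule TI_uminus) simp
lemma te_trans: "te P Q \<Longrightarrow> te Q R \<Longrightarrow> te P R"
proof -
  assume "te P Q" "te Q R"
  then have "(P - Q) + (Q - R) \<in> TI" unfolding te_def by (rule TI_add)
  then show ?thesis unfolding te_def by simp
qed
lemma te_add: "te P P' \<Longrightarrow> te Q Q' \<Longrightarrow> te (P + Q) (P' + Q')"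
proof -
  assume "te P P'" "te Q Q'"
  then have "(P - P') + (Q - Q') \<in> TI" unfolding te_def by (rule TI_add)
  then show ?thesis unfolding te_def by (simp add: algebra_simps)
qed
lemma te_diff: "te P P' \<Longrightarrow> te Q Q' \<Longrightarrow> te (P - Q) (P' - Q')"
proof -
  assume "te P P'" "te Q Q'"
  then have "(P - P') - (Q - Q') \<in> TI" unfolding te_def by (rule TI_diff)
  then show ?thesis unfolding te_def by (simp add: algebra_simps)
qed
lemma te_zero: "P \<in> TI \<Longrightarrow> te P 0" by (simp add: te_def)
lemma te_TI: "te P Q \<Longrightarrow> Q \<in> TI \<Longrightarrow> P \<in> TI"
  unfolding te_def by (drule TI_add) auto

lemma te_mult: "te P P' \<Longrightarrow> te Q Q' \<Longrightarrow> fsupp P' \<Longrightarrow> fsupp Q \<Longrightarrow> te (fa2_mult P Q) (fa2_mult P' Q')"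
proof -
  assume a: "te P P'" "te Q Q'" "fsupp P'" "fsupp Q"
  have "fa2_mult (P - P') Q + fa2_mult P' (Q - Q') \<in> TI"
    using a unfolding te_def by (intro TI_add TI_mult_right TI_mult_left)
  then show ?thesis unfolding te_def by (simp add: fa2_mult_diff_left fa2_mult_diff_right algebra_simps)
qed

abbreviation tw :: "gen list \<Rightarrow> gen list \<Rightarrow> 'k::field fa2" where
  "tw u v \<equiv> fa_tensor (fa_word u) (fa_word v)"

lemma tw_mult: "fa2_mult (tw a b) (tw c d) = (tw (a@c) (b@d) :: 'k::field fa2)"
  by (rule fa_tensor_word)

lemma fa2_one_tw: "fa2_one = tw [] []" by (simp add: fa2_one_def)

lemma te_GA: "te (delta_gen GA) (tw [GA] [GA] :: 'k::field fa2)"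
  unfolding te_def by (simp add: fa_add_eq delta_gen.simps) (rule TI_right, simp, rule cword, simp)
lemma te_GD: "te (delta_gen GD) (tw [GD] [GD] :: 'k::field fa2)"
  unfolding te_def by (simp add: fa_add_eq delta_gen.simps) (rule TI_left, rule cword, simp, simp)
lemma te_GC: "delta_gen GC \<in> (TI :: 'k::field fa2 set)"
  by (simp add: fa_add_eq delta_gen.simps) (intro TI_add TI_left TI_right cword, auto)
lemma dg_GB: "delta_gen GB = (tw [GA] [GB] + tw [GB] [GD] :: 'k::field fa2)"
  by (simp add: fa_add_eq delta_gen.simps)
lemma te_eq: "P = Q \<Longrightarrow> te P Q" by simp

definition G4 :: "gen set" where "G4 = {GA, GD, GDel, GDelInv}"

lemma te_gen4: "x \<in> G4 \<Longrightarrow> te (delta_gen x) (tw [x] [x] :: 'k::field fa2)"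
  unfolding G4_def using te_GA te_GD by (auto simp: delta_gen.simps)

lemma dw_good: "set w \<subseteq> G4 \<Longrightarrow> te (delta_word w) (tw w w :: 'k::field fa2)"
proof (induction w)
  case Nil then show ?case by (simp add: fa2_one_tw)
next
  case (Cons x w)
  have "te (fa2_mult (delta_gen x) (delta_word w)) (fa2_mult (tw [x] [x]) (tw w w) :: 'k fa2)"
    using Cons by (intro te_mult te_gen4) auto
  then show ?case by (simp add: dw_Cons tw_mult)
qed

lemma dw_c: "GC \<in> set w \<Longrightarrow> delta_word w \<in> (TI :: 'k::field fa2 set)"
proof (induction w)
  case (Cons x w)
  show ?case
  proof (cases "x = GC")
    case True then show ?thesis by (simp add: dw_Cons TI_mult_right te_GC)
  next
    case False then show ?thesis using Cons by (simp add: dw_Cons TI_mult_left)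
  qed
qed simp

lemma dw_b:
  assumes "set u \<subseteq> G4" "set v \<subseteq> G4"
  shows "te (delta_word (u @ GB # v)) (tw (u @ GA # v) (u @ GB # v) + tw (u @ GB # v) (u @ GD # v) :: 'k::field fa2)"
proof -
  have "delta_word (u @ GB # v) = fa2_mult (delta_word u) (fa2_mult (delta_gen GB) (delta_word v) :: 'k fa2)"
    by (simp add: dw_append dw_Cons)
  moreover have "te (fa2_mult (delta_word u) (fa2_mult (delta_gen GB) (delta_word v)))
     (fa2_mult (tw u u) (fa2_mult (tw [GA] [GB] + tw [GB] [GD]) (tw v v)) :: 'k fa2)"
    using assms by (intro te_mult dw_good te_eq[OF dg_GB]) auto
  moreover have "fa2_mult (tw u u) (fa2_mult (tw [GA] [GB] + tw [GB] [GD]) (tw v v)) =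
     (tw (u @ GA # v) (u @ GB # v) + tw (u @ GB # v) (u @ GD # v) :: 'k fa2)"
    by (simp add: fa2_mult_add_left fa2_mult_add_right tw_mult)
  ultimately show ?thesis by simp
qed

lemma TT: "W (TYPE('k::field)) u u' \<Longrightarrow> W TYPE('k) v v' \<Longrightarrow> te (tw u v) (tw u' v' :: 'k fa2)"
proof -
  assume a: "W TYPE('k) u u'" "W TYPE('k) v v'"
  have "fa_tensor (fa_word u - fa_word u') (fa_word v) + fa_tensor (fa_word u') (fa_word v - fa_word v') \<in> (TI :: 'k fa2 set)"
    using a unfolding W_def by (intro TI_add TI_left TI_right) auto
  then show ?thesis unfolding te_def by (simp add: fa_tensor_diff_left fa_tensor_diff_right algebra_simps)
qed


lemma Delta_w2: "fa_Delta (fa_word u - fa_word v) = (delta_word u - delta_word v :: 'k::field fa2)"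
  by (simp add: fa_Delta_diff)
lemma Delta_w3: "fa_Delta (fa_word u - fa_word v - fa_word w) = (delta_word u - delta_word v - delta_word w :: 'k::field fa2)"
  by (simp add: fa_Delta_diff)

lemma G4_simps[simp]: "GA \<in> G4" "GD \<in> G4" "GDel \<in> G4" "GDelInv \<in> G4" by (auto simp: G4_def)

abbreviation "TK \<equiv> TYPE('k::field)"

lemma te_dw_good: "set w \<subseteq> G4 \<Longrightarrow> W (TYPE('k::field)) w w' \<Longrightarrow> set w' \<subseteq> G4 \<Longrightarrow>
   te (delta_word w - delta_word w') (0 :: 'k fa2)"
proof -
  assume a: "set w \<subseteq> G4" "W TYPE('k) w w'" "set w' \<subseteq> G4"
  have "te (delta_word w - delta_word w') (tw w w - tw w' w' :: 'k fa2)"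
    using a by (intro te_diff dw_good) auto
  moreover have "te (tw w w - tw w' w') (tw w' w' - tw w' w' :: 'k fa2)"
    using a by (intro te_diff TT) auto
  ultimately show ?thesis using te_trans by fastforce
qed

lemma te_trans0: "te P Q \<Longrightarrow> te Q 0 \<Longrightarrow> P \<in> TI"
  using te_trans te_TI TI_zero by blast

lemma fsupp_Delta: "fsupp f \<Longrightarrow> fsupp (fa_Delta f :: 'k::field fa2)"
proof -
  assume "fsupp f"
  then have "finite (supp f)" by (simp add: fsupp_supp)
  show ?thesis by (subst fa_Delta_S[OF \<open>finite (supp f)\<close> subset_refl]) (intro fsupp_sum fsupp_sm fsupp_dw)
qed

lemma rel_Delta: "r \<in> bplus_rels \<Longrightarrow> fa_Delta r \<in> (TI :: 'k::field fa2 set)"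
proof -
  assume "r \<in> bplus_rels"
  then consider
      "r = fa_word [GA,GC] - fa_word [GC,GA]"
    | "r = fa_word [GB,GD] - fa_word [GD,GB]"
    | "r = fa_word [GA,GD] - fa_word [GC,GB] - fa_word [GDel]"
    | "r = fa_word [GD,GA] - fa_word [GB,GC] - fa_word [GDel]"
    | "r = fa_word [GDel,GDelInv] - fa_word []"
    | "r = fa_word [GDelInv,GDel] - fa_word []"
    | "r = fa_word [GA,GDelInv,GD] - fa_word [GB,GDelInv,GC] - fa_word []"
    | "r = fa_word [GD,GDelInv,GA] - fa_word [GC,GDelInv,GB] - fa_word []"
    | "r = fa_word [GB,GDelInv,GA] - fa_word [GA,GDelInv,GB]"
    | "r = fa_word [GC,GDelInv,GD] - fa_word [GD,GDelInv,GC]"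
    | "r = fa_word [GC]"
    unfolding bplus_rels_def fa_sub_eq by blast
  then show ?thesis
  proof cases
    case 1 then show ?thesis by (simp only: Delta_w2) (intro TI_diff dw_c, auto)
  next
    case 10 then show ?thesis by (simp only: Delta_w2) (intro TI_diff dw_c, auto)
  next
    case 11 then show ?thesis by (simp only: fa_Delta_word) (intro dw_c, auto)
  next
    case 3
    have "te (delta_word [GA,GD] - delta_word [GC,GB] - delta_word [GDel]) (delta_word [GA,GD] - 0 - delta_word [GDel] :: 'k fa2)"
      by (intro te_diff te_zero dw_c) auto
    moreover have "te (delta_word [GA,GD] - 0 - delta_word [GDel]) (0 :: 'k fa2)"
      using te_dw_good[where w="[GA,GD]" and w'="[GDel]", OF _ W_ad] by simp
    ultimately show ?thesis using 3 by (simp only: Delta_w3) (rule te_trans0)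
  next
    case 4
    have "te (delta_word [GD,GA] - delta_word [GB,GC] - delta_word [GDel]) (delta_word [GD,GA] - 0 - delta_word [GDel] :: 'k fa2)"
      by (intro te_diff te_zero dw_c) auto
    moreover have "te (delta_word [GD,GA] - 0 - delta_word [GDel]) (0 :: 'k fa2)"
      using te_dw_good[where w="[GD,GA]" and w'="[GDel]", OF _ W_da] by simp
    ultimately show ?thesis using 4 by (simp only: Delta_w3) (rule te_trans0)
  next
    case 7
    have "te (delta_word [GA,GDelInv,GD] - delta_word [GB,GDelInv,GC] - delta_word []) (delta_word [GA,GDelInv,GD] - 0 - delta_word [] :: 'k fa2)"
      by (intro te_diff te_zero dw_c) auto
    moreover have "te (delta_word [GA,GDelInv,GD] - 0 - delta_word []) (0 :: 'k fa2)"
      using te_dw_good[where w="[GA,GDelInv,GD]" and w'="[]", OF _ W_adinv] by simp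
    ultimately show ?thesis using 7 by (simp only: Delta_w3) (rule te_trans0)
  next
    case 8
    have "te (delta_word [GD,GDelInv,GA] - delta_word [GC,GDelInv,GB] - delta_word []) (delta_word [GD,GDelInv,GA] - 0 - delta_word [] :: 'k fa2)"
      by (intro te_diff te_zero dw_c) auto
    moreover have "te (delta_word [GD,GDelInv,GA] - 0 - delta_word []) (0 :: 'k fa2)"
      using te_dw_good[where w="[GD,GDelInv,GA]" and w'="[]", OF _ W_dainv] by simp
    ultimately show ?thesis using 8 by (simp only: Delta_w3) (rule te_trans0)
  next
    case 5
    have "te (delta_word [GDel,GDelInv] - delta_word []) (0 :: 'k fa2)"
      using te_dw_good[where w="[GDel,GDelInv]" and w'="[]", OF _ W_ddinv] by simp
    then show ?thesis using 5 by (simp only: Delta_w2) (rule te_TI[OF _ TI_zero])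
  next
    case 6
    have "te (delta_word [GDelInv,GDel] - delta_word []) (0 :: 'k fa2)"
      using te_dw_good[where w="[GDelInv,GDel]" and w'="[]", OF _ W_dinvd] by simp
    then show ?thesis using 6 by (simp only: Delta_w2) (rule te_TI[OF _ TI_zero])
  next
    case 2
    have a: "te (delta_word ([] @ GB # [GD])) (tw ([] @ GA # [GD]) ([] @ GB # [GD]) + tw ([] @ GB # [GD]) ([] @ GD # [GD]) :: 'k fa2)"
      by (rule dw_b) auto
    have b: "te (delta_word ([GD] @ GB # [])) (tw ([GD] @ GA # []) ([GD] @ GB # []) + tw ([GD] @ GB # []) ([GD] @ GD # []) :: 'k fa2)"
      by (rule dw_b) auto
    have c: "te (tw [GA,GD] [GB,GD] + tw [GB,GD] [GD,GD]) (tw [GD,GA] [GD,GB] + tw [GD,GB] [GD,GD] :: 'k fa2)"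
      by (intro te_add TT W_comm_ad W_bd W_refl)
    have "te (delta_word [GB,GD] - delta_word [GD,GB]) (0 :: 'k fa2)"
      using te_trans[OF te_trans[OF a[simplified] c] te_sym[OF b[simplified]]] by (simp add: te_def)
    then show ?thesis using 2 by (simp only: Delta_w2) (rule te_TI[OF _ TI_zero])
  next
    case 9
    have a: "te (delta_word ([] @ GB # [GDelInv,GA])) (tw ([] @ GA # [GDelInv,GA]) ([] @ GB # [GDelInv,GA]) + tw ([] @ GB # [GDelInv,GA]) ([] @ GD # [GDelInv,GA])  :: 'k fa2)"
      by (rule dw_b) auto
    have b: "te (delta_word ([GA,GDelInv] @ GB # [])) (tw ([GA,GDelInv] @ GA # []) ([GA,GDelInv] @ GB # []) + tw ([GA,GDelInv] @ GB # []) ([GA,GDelInv] @ GD # []) :: 'k fa2)"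
      by (rule dw_b) auto
    have w: "W TYPE('k) [GD,GDelInv,GA] [GA,GDelInv,GD]"
      by (rule W_trans[OF W_dainv W_sym[OF W_adinv]])
    have c: "te (tw [GA,GDelInv,GA] [GB,GDelInv,GA] + tw [GB,GDelInv,GA] [GD,GDelInv,GA])
                 (tw [GA,GDelInv,GA] [GA,GDelInv,GB] + tw [GA,GDelInv,GB] [GA,GDelInv,GD] :: 'k fa2)"
      by (intro te_add TT W_bda w W_refl)
    have "te (delta_word [GB,GDelInv,GA] - delta_word [GA,GDelInv,GB]) (0 :: 'k fa2)"
      using te_trans[OF te_trans[OF a[simplified] c] te_sym[OF b[simplified]]] by (simp add: te_def)
    then show ?thesis using 9 by (simp only: Delta_w2) (rule te_TI[OF _ TI_zero])
  qed
qed

lemma Delta_Bideal: "f \<in> Bideal \<Longrightarrow> fa_Delta f \<in> (TI :: 'k::field fa2 set)"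
  unfolding Bideal_def
proof (induction f rule: ideal_gen.induct)
  case zero then show ?case unfolding Bideal_def[symmetric] by (simp add: lam0)
next
  case (add f g)
  have "fsupp f" "fsupp g" using add Bideal_fsupp unfolding Bideal_def by auto
  then show ?case using add unfolding Bideal_def[symmetric] fa_add_eq
    by (subst fa_Delta_add) (auto intro: TI_add)
next
  case (gen r x y)
  have fr: "fsupp r" by (rule fsupp_rels[OF gen(1)])
  have "fa_Delta (fa_mult (fa_mult x r) y) = fa2_mult (fa2_mult (fa_Delta x) (fa_Delta r)) (fa_Delta y)"
    using gen fr by (simp add: fa_Delta_mult)
  also have "\<dots> \<in> TI"
    using gen fr by (intro TI_mult_right[OF TI_mult_left[OF rel_Delta[OF gen(1)]]] fsupp_Delta)
  finally show ?case unfolding Bideal_def[symmetric] .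
qed


lemma take_single_iff: "i \<le> length u \<Longrightarrow> take i u = [x] \<longleftrightarrow> (i = 1 \<and> u \<noteq> [] \<and> hd u = x)"
  by (cases u; cases i) auto

lemma dsum0: "(\<Sum>j\<le>k. if j = (1::nat) then X else 0) = (if 1 \<le> k then X else (0::'a::comm_monoid_add))"
  by (induction k) auto

lemma dsum1: "(\<Sum>i\<le>(m::nat). \<Sum>j\<le>(k::nat). if i = 1 \<and> j = 1 then X else 0) = (if 1 \<le> m \<and> 1 \<le> k then X else (0::'a::comm_monoid_add))"
proof -
  have "(\<Sum>j\<le>k. if i = 1 \<and> j = 1 then X else 0) = (if i = 1 \<and> 1 \<le> k then X else (0::'a))" for i :: nat
    by (cases "i = 1") (simp_all add: dsum0)
  then show ?thesis by (cases "1 \<le> k") (simp_all add: dsum0)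
qed

lemma LM: "fa2_mult (tw [x] [y]) P (u, v) =
  (if u \<noteq> [] \<and> v \<noteq> [] \<and> hd u = x \<and> hd v = y then P (tl u, tl v) else (0::'k::field))"
proof -
  have "fa2_mult (tw [x] [y]) P (u, v) = (\<Sum>i\<le>length u. \<Sum>j\<le>length v.
          if i = 1 \<and> j = 1 then (if u \<noteq> [] \<and> v \<noteq> [] \<and> hd u = x \<and> hd v = y then P (tl u, tl v) else 0) else (0::'k))"
    unfolding fa2_mult_def fa_tensor_def fa_word_def prod.case
    by (intro sum.cong refl) (auto simp: take_single_iff drop_Suc)
  also have "\<dots> = (if u \<noteq> [] \<and> v \<noteq> [] \<and> hd u = x \<and> hd v = y then P (tl u, tl v) else 0)"
    by (simp only: dsum1) (cases u; cases v; simp)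
  finally show ?thesis .
qed

definition bd :: "gen list \<Rightarrow> gen list" where
  "bd w = map (\<lambda>x. if x = GB then GD else x) w"

fun Ef :: "gen list \<Rightarrow> 'k::field fa2" where
  "Ef [] = tw [] []"
| "Ef (x # w) = (if x = GB then fa2_mult (tw [GA] [GB] + tw [GB] [GD]) (Ef w) else fa2_mult (tw [x] [x]) (Ef w))"

lemma fsupp_Ef[simp]: "fsupp (Ef w :: 'k::field fa2)"
  by (induction w) (auto intro!: fsupp2_mult)

lemma te_Ef: "GC \<notin> set w \<Longrightarrow> te (delta_word w) (Ef w :: 'k::field fa2)"
proof (induction w)
  case Nil then show ?case by (simp add: fa2_one_tw)
next
  case (Cons x w)
  then have IH: "te (delta_word w) (Ef w :: 'k fa2)" and x: "x \<noteq> GC" by auto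
  show ?case
  proof (cases "x = GB")
    case True
    then show ?thesis by (simp add: dw_Cons) (intro te_mult IH te_eq dg_GB, auto)
  next
    case False
    then have "x \<in> G4" using x by (cases x) (auto simp: G4_def)
    then show ?thesis using False by (simp add: dw_Cons) (intro te_mult IH te_gen4, auto)
  qed
qed

lemma nbc_Cons[simp]: "nbc (x # w) = lb x + nbc w" by (simp add: nbc_def)
lemma nbc_Nil[simp]: "nbc [] = 0" by (simp add: nbc_def)

lemma Ef_supp:
  "GC \<notin> set w \<Longrightarrow> Ef w (u, v) \<noteq> (0::'k::field) \<Longrightarrow>
     GC \<notin> set u \<and> nbc u \<le> nbc w \<and> (nbc u = nbc w \<longrightarrow> u = w \<and> v = bd w)"
proof (induction w arbitrary: u v)
  case Nil then show ?case by (auto simp: fa_tensor_def fa_word_def bd_def split: if_splits)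
next
  case (Cons x w)
  from Cons.prems have x: "x \<noteq> GC" and wc: "GC \<notin> set w" by auto
  have ne: "u \<noteq> []" "v \<noteq> []" using Cons.prems(2)
    by (auto simp: LM fa2_mult_add_left split: if_splits)
  obtain a u' where u: "u = a # u'" using ne by (cases u) auto
  obtain b v' where v: "v = b # v'" using ne by (cases v) auto
  show ?case
  proof (cases "x = GB")
    case True
    then have "(a = GA \<and> b = GB \<or> a = GB \<and> b = GD) \<and> Ef w (u', v') \<noteq> (0::'k)"
      using Cons.prems(2) by (auto simp: u v LM fa2_mult_add_left split: if_splits)
    then show ?thesis using Cons.IH[OF wc, of u' v'] True by (auto simp: u v bd_def)
  next
    case False
    then have "a = x \<and> b = x \<and> Ef w (u', v') \<noteq> (0::'k)"
      using Cons.prems(2) by (auto simp: u v LM split: if_splits)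
    moreover have "lb x = 0" using x False by (cases x) auto
    ultimately show ?thesis using Cons.IH[OF wc, of u' v'] False x by (auto simp: u v bd_def)
  qed
qed

lemma Ef_top: "GC \<notin> set w \<Longrightarrow> Ef w (w, bd w) = (1::'k::field)"
proof (induction w)
  case Nil then show ?case by (simp add: fa_tensor_def fa_word_def bd_def)
next
  case (Cons x w)
  then show ?case by (auto simp: LM fa2_mult_add_left bd_def)
qed


definition lin :: "('k::field fa \<Rightarrow> 'k) \<Rightarrow> bool" where
  "lin \<phi> \<longleftrightarrow> (\<forall>f g. \<phi> (f + g) = \<phi> f + \<phi> g) \<and> (\<forall>c f. \<phi> (sm c f) = c * \<phi> f)"

lemma sum_single: "finite S \<Longrightarrow> (\<And>u. u \<in> S \<Longrightarrow> u \<noteq> w \<Longrightarrow> g u = 0) \<Longrightarrow> sum g S = (if w \<in> S then g w else (0::'a::comm_monoid_add))"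
proof -
  assume "finite S" "\<And>u. u \<in> S \<Longrightarrow> u \<noteq> w \<Longrightarrow> g u = 0"
  then have "sum g S = (\<Sum>u\<in>S. if u = w then g u else 0)" by (intro sum.cong) auto
  also have "\<dots> = (if w \<in> S then g w else 0)" using \<open>finite S\<close> by simp
  finally show ?thesis .
qed

context
  fixes \<phi> :: "'k::field fa \<Rightarrow> 'k" and n :: int
  assumes lin: "lin \<phi>"
    and kill: "\<And>f. f \<in> Bideal \<Longrightarrow> \<phi> f = 0"
    and sph: "\<And>u. \<phi> (fa_word u) \<noteq> 0 \<Longrightarrow> GC \<notin> set u \<and> nbc u = n"
begin

lemma phi_add: "\<phi> (f + g) = \<phi> f + \<phi> g" using lin by (simp add: lin_def)
lemma phi_sm: "\<phi> (sm c f) = c * \<phi> f" using lin by (simp add: lin_def)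
lemma phi_zero: "\<phi> 0 = 0" using phi_sm[of 0 0] by simp
lemma phi_sum: "\<phi> (sum F S) = (\<Sum>i\<in>S. \<phi> (F i))"
proof (induction S rule: infinite_finite_induct)
  case (infinite A) then show ?case by (simp only: sum.infinite[OF infinite] phi_zero)
next
  case empty then show ?case by (simp only: sum.empty phi_zero)
next
  case (insert x A) then show ?case by (simp only: sum.insert[OF insert(1,2)] phi_add)
qed

lemma phi_expand_S: "finite S \<Longrightarrow> supp f \<subseteq> S \<Longrightarrow> \<phi> f = (\<Sum>u\<in>S. f u * \<phi> (fa_word u))"
  by (subst decomp[of S f], assumption+) (simp add: phi_sum phi_sm)

definition Lph :: "'k fa2 \<Rightarrow> 'k fa" where
  "Lph P = (\<lambda>v. \<phi> (\<lambda>u. P (u, v)))"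

lemma Lph_add: "Lph (P + Q) = Lph P + Lph Q"
proof
  fix v
  have "(\<lambda>u. (P + Q) (u, v)) = (\<lambda>u. P (u, v)) + (\<lambda>u. Q (u,v))" by (simp add: fun_eq_iff)
  then show "Lph (P + Q) v = (Lph P + Lph Q) v" by (simp add: Lph_def phi_add)
qed
lemma Lph_sm: "Lph (sm c P) = sm c (Lph P)"
proof
  fix v
  have "(\<lambda>u. sm c P (u, v)) = sm c (\<lambda>u. P (u, v))" by (simp add: fun_eq_iff)
  then show "Lph (sm c P) v = sm c (Lph P) v" by (simp add: Lph_def phi_sm)
qed
lemma Lph_zero: "Lph 0 = 0"
  using Lph_sm[of 0 0] by simp
lemma Lph_diff: "Lph (P - Q) = Lph P - Lph Q"
proof -
  have e: "P - Q = P + sm (-1) Q" by (simp add: fun_eq_iff)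
  have "Lph (P - Q) = Lph P + sm (-1) (Lph Q)" by (simp only: e Lph_add Lph_sm)
  then show ?thesis by (simp add: fun_eq_iff)
qed
lemma Lph_sum: "Lph (sum F S) = (\<Sum>i\<in>S. Lph (F i))"
proof (induction S rule: infinite_finite_induct)
  case (infinite A) then show ?case by (simp only: sum.infinite[OF infinite] Lph_zero)
next
  case empty then show ?case by (simp only: sum.empty Lph_zero)
next
  case (insert x A) then show ?case by (simp only: sum.insert[OF insert(1,2)] Lph_add)
qed

lemma Lph_tensor: "Lph (fa_tensor p q) = sm (\<phi> p) q"
proof
  fix v
  have "(\<lambda>u. fa_tensor p q (u, v)) = sm (q v) p" by (simp add: fun_eq_iff fa_tensor_def mult.commute)
  then show "Lph (fa_tensor p q) v = sm (\<phi> p) q v" by (simp add: Lph_def phi_sm mult.commute)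
qed

lemma Lph_TI: "P \<in> TI \<Longrightarrow> Lph P \<in> Bideal"
proof (induction P rule: tensor_ideal.induct)
  case zero then show ?case using Lph_zero by (simp add: lam0)
next
  case (left p q) then show ?case by (simp only: Lph_tensor kill[OF left(1)] sm_zero Bideal_zero)
next
  case (right p q) then show ?case by (simp only: Lph_tensor) (rule Bideal_sm[OF right(2)])
next
  case (add P Q) then show ?case unfolding fa_add_eq Lph_add by (intro Bideal_add add.IH)
qed

lemma Lph_Delta: "fsupp f \<Longrightarrow> Lph (fa_Delta f) = (\<Sum>w\<in>supp f. sm (f w) (Lph (delta_word w)))"
  by (subst fa_Delta_S[where S="supp f"]) (auto simp: fsupp_supp Lph_sum Lph_sm)

lemma Lph_Ef:
  assumes c: "GC \<notin> set w" and nb: "nbc w \<le> n"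
  shows "Lph (Ef w) = sm (\<phi> (fa_word w)) (fa_word (bd w))"
proof
  fix v
  let ?s = "\<lambda>u. (Ef w (u, v) :: 'k)"
  have fs: "finite (supp (Ef w :: 'k fa2))" using fsupp_Ef by (simp add: fsupp_supp)
  let ?S = "insert w (fst ` supp (Ef w :: 'k fa2))"
  have sub: "supp ?s \<subseteq> ?S" by (force simp: supp_def)
  have "Lph (Ef w) v = (\<Sum>u\<in>?S. ?s u * \<phi> (fa_word u))"
    unfolding Lph_def using fs sub by (intro phi_expand_S) auto
  also have "\<dots> = (if v = bd w then \<phi> (fa_word w) else 0)"
  proof -
    have z: "?s u * \<phi> (fa_word u) = 0" if "u \<noteq> w \<or> v \<noteq> bd w" for u
    proof (rule ccontr)
      assume "?s u * \<phi> (fa_word u) \<noteq> 0"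
      then have a: "?s u \<noteq> 0" "\<phi> (fa_word u) \<noteq> 0" by auto
      from sph[OF a(2)] have "nbc u = n" by simp
      moreover from Ef_supp[OF c a(1)] have "nbc u \<le> nbc w \<and> (nbc u = nbc w \<longrightarrow> u = w \<and> v = bd w)" by simp
      ultimately show False using nb that by auto
    qed
    show ?thesis
    proof (cases "v = bd w")
      case True
      have "(\<Sum>u\<in>?S. ?s u * \<phi> (fa_word u)) = (if w \<in> ?S then ?s w * \<phi> (fa_word w) else 0)"
      proof (rule sum_single)
        show "finite ?S" using fs by simp
      next
        fix u assume "u \<in> ?S" "u \<noteq> w"
        then show "?s u * \<phi> (fa_word u) = 0" by (intro z) simp
      qed
      then have "(\<Sum>u\<in>?S. ?s u * \<phi> (fa_word u)) = ?s w * \<phi> (fa_word w)" by simp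
      then show ?thesis using True Ef_top[OF c, where 'k='k] by simp
    next
      case False
      then show ?thesis using z by (simp add: sum.neutral)
    qed
  qed
  also have "\<dots> = sm (\<phi> (fa_word w)) (fa_word (bd w)) v" by (simp add: fa_word_def)
  finally show "Lph (Ef w) v = sm (\<phi> (fa_word w)) (fa_word (bd w)) v" .
qed

lemma key_word:
  assumes "GC \<in> set w \<or> nbc w \<le> n"
  shows "Lph (delta_word w) - sm (\<phi> (fa_word w)) (fa_word (bd w)) \<in> Bideal"
proof (cases "GC \<in> set w")
  case True
  then have "\<phi> (fa_word w) = 0" using sph by blast
  moreover have "Lph (delta_word w) \<in> Bideal" using Lph_TI[OF dw_c[OF True]] .
  ultimately show ?thesis by simp
next
  case False
  then have nb: "nbc w \<le> n" using assms by simp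
  have "Lph (delta_word w - Ef w) \<in> Bideal"
    using te_Ef[OF False] by (intro Lph_TI) (simp add: te_def)
  then show ?thesis by (simp add: Lph_diff Lph_Ef[OF False nb])
qed

end


lemma vs_fa: "vector_space (sm :: 'k::field \<Rightarrow> 'k fa \<Rightarrow> 'k fa)"
  by unfold_locales (auto simp: sm_def fun_eq_iff algebra_simps)
lemma vs_k: "vector_space ((*) :: 'k::field \<Rightarrow> 'k \<Rightarrow> 'k)"
  by unfold_locales (auto simp: algebra_simps)

lemma separation:
  assumes h: "h \<notin> (Bideal :: 'k::field fa set)"
  shows "\<exists>\<psi>. lin \<psi> \<and> (\<forall>f\<in>Bideal. \<psi> f = 0) \<and> \<psi> h = 1"
proof -
  interpret V: vector_space "sm :: 'k \<Rightarrow> 'k fa \<Rightarrow> 'k fa" by (rule vs_fa)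
  interpret P: vector_space_pair "sm :: 'k \<Rightarrow> 'k fa \<Rightarrow> 'k fa" "(*) :: 'k \<Rightarrow> 'k \<Rightarrow> 'k"
    by (intro vector_space_pair.intro vs_fa vs_k)
  have sub: "V.subspace Bideal"
    by (rule V.subspaceI) auto
  obtain B where B: "B \<subseteq> Bideal" "V.independent B" "Bideal \<subseteq> V.span B"
    by (rule V.maximal_independent_subset)
  have spB: "V.span B \<subseteq> Bideal" by (rule V.span_minimal[OF B(1) sub])
  have hB: "h \<notin> V.span B" using spB h by auto
  have ind: "V.independent (insert h B)" by (rule V.independent_insertI[OF hB B(2)])
  obtain g where g: "Vector_Spaces.linear sm (*) g" "\<forall>x\<in>insert h B. g x = (if x = h then 1 else 0)"
    using P.linear_independent_extend[OF ind, of "\<lambda>x. if x = h then 1 else 0"] by blast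
  have g0: "g x = 0" if "x \<in> B" for x using g(2) that hB by (auto dest: V.span_base)
  have "\<forall>f\<in>Bideal. g f = 0"
    using P.linear_eq_0_on_span[OF g(1) g0] B(3) by auto
  moreover have "lin g" unfolding lin_def
    using P.linear_add[OF g(1)] P.linear_scale[OF g(1)] by simp
  moreover have "g h = 1" using g(2) by simp
  ultimately show ?thesis by blast
qed

definition epsw :: "gen list \<Rightarrow> 'k::field" where "epsw w = prod_list (map eps_gen w)"

lemma fa_eps_LE: "fa_eps f = LE epsw f"
  by (simp add: fa_eps_def LE_def supp_def epsw_def)

lemma eps_Bideal: "f \<in> Bideal \<Longrightarrow> fa_eps (f :: 'k::field fa) = 0"
  unfolding Bideal_def fa_eps_LE
proof (induction f rule: ideal_gen.induct)
  case zero then show ?case by simp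
next
  case (add f g)
  have fs: "fsupp f" "fsupp g" using add Bideal_fsupp unfolding Bideal_def by auto
  show ?case unfolding fa_add_eq LE_add[OF fs] using add.IH by simp
next
  case (gen r x y)
  have fr: "fsupp r" by (rule fsupp_rels[OF gen(1)])
  have "LE epsw r = (0::'k)" using gen(1)
    unfolding bplus_rels_def fa_sub_eq
    by (elim insertE emptyE; hypsubst; simp add: LE_diff epsw_def)
  moreover have "LE epsw (fa_mult (fa_mult x r) y) = LE epsw x * LE epsw r * LE epsw (y :: 'k fa)"
    using gen fr by (simp add: LE_mult_hom epsw_def)
  ultimately show ?case by simp
qed


lemma proj'_add: "proj' K (f + g) = proj' K f + proj' K g" by (auto simp: proj'_def fun_eq_iff)
lemma proj'_sm: "proj' K (sm c f) = sm c (proj' K f)" by (auto simp: proj'_def fun_eq_iff)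
lemma proj'_word: "proj' K (fa_word u) = (if cls u = K \<and> GC \<notin> set u then fa_word u else 0)"
  by (auto simp: proj'_def fun_eq_iff fa_word_def)

lemma bd_G4: "GC \<notin> set w \<Longrightarrow> set (bd w) \<subseteq> G4"
proof (induction w)
  case (Cons x w) then show ?case by (cases x) (auto simp: bd_def G4_def)
qed (simp add: bd_def)

lemma wa_bd: "wa (bd w) = wa w" by (induction w) (auto simp: bd_def wa_def)
lemma wd_bd: "wd (bd w) = wd w" by (induction w) (auto simp: bd_def wd_def)

lemma a_pow_G4: "set (a_pow_word p) \<subseteq> G4" by (auto simp: a_pow_word_def G4_def)
lemma d_pow_G4: "set (d_pow_word p) \<subseteq> G4" by (auto simp: d_pow_word_def G4_def)

lemma epsw_G4: "set w \<subseteq> G4 \<Longrightarrow> epsw w = (1::'k::field)"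
proof (induction w)
  case (Cons x w) then show ?case by (cases x) (auto simp: epsw_def G4_def)
qed (simp add: epsw_def)

lemma grouplike_G4:
  assumes "set v \<subseteq> G4"
  shows "grouplike (fa_word v :: 'k::field fa)"
proof -
  have "te (delta_word v) (tw v v :: 'k fa2)" by (rule dw_good[OF assms])
  then have "HHeq (fa_Delta (fa_word v)) (fa_tensor (fa_word v) (fa_word v) :: 'k fa2)"
    by (simp add: HHeq_def te_def fa_sub_eq)
  moreover have "fa_eps (fa_word v :: 'k fa) = 1"
    using epsw_G4[OF assms] by (simp add: fa_eps_LE)
  ultimately show ?thesis by (simp add: grouplike_def)
qed

theorem mainTheorem16:
  fixes X :: "'n::finite \<Rightarrow> 'n \<Rightarrow> 'k::field fa"
  assumes "alg_closed_field TYPE('k)"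
    and "is_left_comodule X"
  shows "\<exists>w g. semi_invariant_with X w g \<and>
           (\<exists>p q :: int. Heq g (fa_word (a_pow_word p @ d_pow_word q)))"
proof -
  have fsX: "\<And>j i. fsupp (X j i)"
    and com: "\<And>j i. HHeq (fa_Delta (X j i)) (\<lambda>uv. \<Sum>k\<in>UNIV. fa_tensor (X j k) (X k i) uv)"
    and eps: "\<And>j i. fa_eps (X j i) = (if j = i then 1 else 0)"
    using assms(2) unfolding is_left_comodule_def by auto
  define Sup where "Sup = (\<Union>j i. supp (X j i))"
  have finSup: "finite Sup" unfolding Sup_def using fsX by (auto simp: fsupp_supp)
  define Kset where "Kset = cls ` Sup"
  have finK: "finite Kset" unfolding Kset_def using finSup by simp
  define Good where "Good = {K \<in> Kset. \<exists>j i. proj' K (X j i) \<notin> Bideal}"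
  have finG: "finite Good" unfolding Good_def using finK by simp
  have Gne: "Good \<noteq> {}"
  proof
    assume G0: "Good = {}"
    obtain j :: 'n where True by simp
    have sub: "cls ` supp (X j j) \<subseteq> Kset" unfolding Kset_def Sup_def by auto
    have "cpart (X j j) + (\<Sum>K\<in>cls ` supp (X j j). proj' K (X j j)) \<in> Bideal"
    proof (intro Bideal_add Bideal_sum cpart_Bideal fsX)
      fix K assume "K \<in> cls ` supp (X j j)"
      then have "K \<in> Kset" using sub by auto
      then show "proj' K (X j j) \<in> Bideal" using G0 unfolding Good_def by blast
    qed
    then have "X j j \<in> Bideal" using decomp_cls[OF fsX[of j j]] by simp
    then have "fa_eps (X j j) = 0" by (rule eps_Bideal)
    then show False using eps[of j j] by simp
  qed
  define n where "n = Max (fst ` Good)"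
  have "n \<in> fst ` Good" unfolding n_def using finG Gne by (intro Max_in) auto
  then obtain K0 where K0: "K0 \<in> Good" "fst K0 = n" by auto
  then obtain j0 i0 where ji0: "proj' K0 (X j0 i0) \<notin> Bideal" unfolding Good_def by auto
  have high: "proj' K (X j i) \<in> Bideal" if "K \<in> Kset" "fst K > n" for K j i
  proof (rule ccontr)
    assume "proj' K (X j i) \<notin> Bideal"
    then have "K \<in> Good" using that unfolding Good_def by auto
    then have "fst K \<le> n" unfolding n_def using finG by (intro Max_ge) auto
    then show False using that by simp
  qed
  obtain \<psi> where psi: "lin \<psi>" "\<forall>f\<in>Bideal. \<psi> f = 0" "\<psi> (proj' K0 (X j0 i0)) = 1"
    using separation[OF ji0] by blast
  define \<phi> where "\<phi> = (\<lambda>f. \<psi> (proj' K0 f))"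
  have lphi: "lin \<phi>" using psi(1) unfolding lin_def \<phi>_def by (simp add: proj'_add proj'_sm)
  have kphi: "\<And>f. f \<in> Bideal \<Longrightarrow> \<phi> f = 0" unfolding \<phi>_def using psi(2) proj'_Bideal by blast
  have psi0: "\<psi> 0 = 0" using psi(2) by simp
  have sphi: "\<And>u. \<phi> (fa_word u) \<noteq> 0 \<Longrightarrow> GC \<notin> set u \<and> nbc u = n"
  proof -
    fix u assume "\<phi> (fa_word u) \<noteq> 0"
    then have "cls u = K0 \<and> GC \<notin> set u" unfolding \<phi>_def proj'_word using psi0 by (auto split: if_splits)
    then show "GC \<notin> set u \<and> nbc u = n" using K0(2) by (auto simp: cls_def)
  qed
  have cls_phi: "\<And>u. \<phi> (fa_word u) \<noteq> 0 \<Longrightarrow> cls u = K0"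
    unfolding \<phi>_def proj'_word using psi0 by (auto split: if_splits)
  obtain p0 q0 where K0eq: "K0 = (n, p0, q0)" using K0(2) by (cases K0) auto
  define g0 :: "'k fa" where "g0 = fa_word (a_pow_word p0 @ d_pow_word q0)"
  define u where "u = (\<lambda>k. \<phi> (X j0 k))"
  have u0: "u i0 = 1" unfolding u_def \<phi>_def using psi(3) .
  have main: "(\<Sum>k\<in>UNIV. sm (u k) (X k i)) - sm (u i) g0 \<in> Bideal" for i
  proof -
    have LT: "\<And>P. P \<in> TI \<Longrightarrow> Lph \<phi> P \<in> Bideal"
      by (rule Lph_TI[where n=n]) (assumption | rule lphi kphi sphi)+
    have Ldiff: "\<And>P Q. Lph \<phi> (P - Q) = Lph \<phi> P - Lph \<phi> Q"
      by (rule Lph_diff[where n=n]) (assumption | rule lphi kphi sphi)+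
    have Ladd: "\<And>P Q. Lph \<phi> (P + Q) = Lph \<phi> P + Lph \<phi> Q"
      by (rule Lph_add[where n=n]) (assumption | rule lphi kphi sphi)+
    have Lsum: "\<And>F S. Lph \<phi> (sum F S) = (\<Sum>i\<in>S. Lph \<phi> (F i))"
      by (rule Lph_sum[where n=n]) (assumption | rule lphi kphi sphi)+
    have Lten: "\<And>p q. Lph \<phi> (fa_tensor p q) = sm (\<phi> p) q"
      by (rule Lph_tensor[where n=n]) (assumption | rule lphi kphi sphi)+
    have LDel: "\<And>f. fsupp f \<Longrightarrow> Lph \<phi> (fa_Delta f) = (\<Sum>w\<in>supp f. sm (f w) (Lph \<phi> (delta_word w)))"
      by (rule Lph_Delta[where n=n]) (assumption | rule lphi kphi sphi)+
    have KW: "\<And>w. GC \<in> set w \<or> nbc w \<le> n \<Longrightarrow> Lph \<phi> (delta_word w) - sm (\<phi> (fa_word w)) (fa_word (bd w)) \<in> Bideal"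
      by (rule key_word[where n=n]) (assumption | rule lphi kphi sphi)+
    have PE: "\<And>S f. finite S \<Longrightarrow> supp f \<subseteq> S \<Longrightarrow> \<phi> f = (\<Sum>u\<in>S. f u * \<phi> (fa_word u))"
      by (rule phi_expand_S[where n=n]) (assumption | rule lphi kphi sphi)+
    have Padd: "\<And>f g. \<phi> (f + g) = \<phi> f + \<phi> g"
      by (rule phi_add[where n=n]) (assumption | rule lphi kphi sphi)+
    let ?L = "Lph \<phi>"
    define H where "H = {K \<in> Kset. fst K > n}"
    have finH: "finite H" unfolding H_def using finK by simp
    define R where "R = (\<Sum>K\<in>H. proj' K (X j0 i))"
    define X' where "X' = X j0 i - R"
    have RB: "R \<in> Bideal" unfolding R_def H_def by (intro Bideal_sum high) auto
    have fsR: "fsupp R" by (rule Bideal_fsupp[OF RB])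
    have fsX': "fsupp X'" unfolding X'_def using fsX fsR by simp
    have XX: "X j0 i = X' + R" unfolding X'_def by simp
    have X'supp: "GC \<in> set w \<or> nbc w \<le> n" if "w \<in> supp X'" for w
    proof (rule ccontr)
      assume a: "\<not> (GC \<in> set w \<or> nbc w \<le> n)"
      have Rw: "R w = (\<Sum>K\<in>H. if cls w = K then X j0 i w else 0)"
        unfolding R_def fun_sum_apply proj'_def using a by simp
      also have "\<dots> = (if cls w \<in> H then X j0 i w else 0)" using finH by simp
      finally have Rw': "R w = (if cls w \<in> H then X j0 i w else 0)" .
      have "X' w = 0"
      proof (cases "X j0 i w = 0")
        case True then show ?thesis using Rw' by (simp add: X'_def)
      next
        case False
        then have "w \<in> Sup" unfolding Sup_def supp_def by auto
        then have "cls w \<in> H" unfolding H_def Kset_def using a by (auto simp: cls_def)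
        then show ?thesis using Rw' by (simp add: X'_def)
      qed
      then show False using that by (simp add: supp_def)
    qed
    have A1: "fa_Delta (X j0 i) - (\<Sum>k\<in>UNIV. fa_tensor (X j0 k) (X k i)) \<in> TI"
    proof -
      have "(\<lambda>uv. \<Sum>k\<in>UNIV. fa_tensor (X j0 k) (X k i) uv) = (\<Sum>k\<in>UNIV. fa_tensor (X j0 k) (X k i))"
        by (simp add: fun_eq_iff fun_sum_apply)
      then show ?thesis using com[of j0 i] by (simp add: HHeq_def fa_sub_eq)
    qed
    have B1: "?L (fa_Delta (X j0 i)) - (\<Sum>k\<in>UNIV. sm (u k) (X k i)) \<in> Bideal"
      using LT[OF A1] by (simp add: Ldiff Lsum Lten u_def)
    have LX: "?L (fa_Delta (X j0 i)) = ?L (fa_Delta X') + ?L (fa_Delta R)"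
      unfolding XX by (simp add: fa_Delta_add[OF fsX' fsR] Ladd)
    have B2: "?L (fa_Delta R) \<in> Bideal" by (rule LT[OF Delta_Bideal[OF RB]])
    define S1 where "S1 = (\<Sum>w\<in>supp X'. sm (X' w) (sm (\<phi> (fa_word w)) (fa_word (bd w))))"
    define S2 where "S2 = (\<Sum>w\<in>supp X'. sm (X' w) (sm (\<phi> (fa_word w)) g0))"
    have S0: "?L (fa_Delta X') = (\<Sum>w\<in>supp X'. sm (X' w) (?L (delta_word w)))" by (rule LDel[OF fsX'])
    have B3: "?L (fa_Delta X') - S1 \<in> Bideal"
    proof -
      have "?L (fa_Delta X') - S1 = (\<Sum>w\<in>supp X'. sm (X' w) (?L (delta_word w) - sm (\<phi> (fa_word w)) (fa_word (bd w))))"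
        unfolding S0 S1_def by (simp add: sm_diff sum_subtractf)
      also have "\<dots> \<in> Bideal" by (intro Bideal_sum Bideal_sm KW X'supp)
      finally show ?thesis .
    qed
    have B4: "S1 - S2 \<in> Bideal"
    proof -
      have "S1 - S2 = (\<Sum>w\<in>supp X'. sm (X' w * \<phi> (fa_word w)) (fa_word (bd w) - g0))"
        unfolding S1_def S2_def by (simp add: sm_diff sum_subtractf)
      also have "\<dots> \<in> Bideal"
      proof (intro Bideal_sum)
        fix w
        show "sm (X' w * \<phi> (fa_word w)) (fa_word (bd w) - g0) \<in> Bideal"
        proof (cases "\<phi> (fa_word w) = 0")
          case True then show ?thesis by simp
        next
          case False
          have c: "GC \<notin> set w" using sphi[OF False] by simp
          have cw: "cls w = K0" by (rule cls_phi[OF False])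
          then have "wa w = p0" "wd w = q0" using K0eq by (auto simp: cls_def)
          then have "W TYPE('k) (bd w) (a_pow_word p0 @ d_pow_word q0)"
            using NF[OF bd_G4[OF c, unfolded G4_def], where 'k='k] by (simp add: wa_bd wd_bd)
          then have "fa_word (bd w) - g0 \<in> Bideal" by (simp add: W_def g0_def)
          then show ?thesis by simp
        qed
      qed
      finally show ?thesis .
    qed
    have S2eq: "S2 = sm (u i) g0"
    proof -
      have "S2 = sm (\<Sum>w\<in>supp X'. X' w * \<phi> (fa_word w)) g0"
        unfolding S2_def by (simp add: sum_sm)
      also have "(\<Sum>w\<in>supp X'. X' w * \<phi> (fa_word w)) = \<phi> X'"
        using fsX' by (intro PE[symmetric]) (auto simp: fsupp_supp)
      also have "\<phi> X' = u i"
        using Padd[of X' R] kphi[OF RB] XX by (simp add: u_def)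
      finally show ?thesis .
    qed
    have "(\<Sum>k\<in>UNIV. sm (u k) (X k i)) - sm (u i) g0 =
       - (?L (fa_Delta (X j0 i)) - (\<Sum>k\<in>UNIV. sm (u k) (X k i))) + ?L (fa_Delta R) + (?L (fa_Delta X') - S1) + (S1 - S2)"
      unfolding LX S2eq by (simp add: algebra_simps)
    also have "\<dots> \<in> Bideal" using B1 B2 B3 B4 by (intro Bideal_add Bideal_uminus)
    finally show ?thesis .
  qed
  have si: "semi_invariant_with X u g0"
    unfolding semi_invariant_with_def
  proof (intro conjI allI)
    show "u \<noteq> (\<lambda>_. 0)"
    proof
      assume "u = (\<lambda>_. 0)"
      then have "u i0 = 0" by simp
      with u0 show False by simp
    qed
    show "grouplike g0" unfolding g0_def by (rule grouplike_G4) (use a_pow_G4 d_pow_G4 in auto)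
  next
    fix i
    have "fa_sub (\<lambda>v. \<Sum>j\<in>UNIV. u j * X j i v) (\<lambda>v. u i * g0 v) = (\<Sum>k\<in>UNIV. sm (u k) (X k i)) - sm (u i) g0"
      by (simp add: fa_sub_def fun_eq_iff fun_sum_apply)
    then show "Heq (\<lambda>v. \<Sum>j\<in>UNIV. u j * X j i v) (\<lambda>v. u i * g0 v)"
      unfolding Heq_def using main[of i] by simp
  qed
  moreover have "Heq g0 (fa_word (a_pow_word p0 @ d_pow_word q0))"
    by (simp add: Heq_def g0_def fa_sub_eq)
  ultimately show ?thesis by blast
qed


end
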